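(* Let $q\in\mathbb{N}$ with $q\ge 2$. Let $A,B\subset(0,\infty)$ be compact intervals which are admissible, i.e. $\operatorname{diam}(A)\le\operatorname{dist}(A,0)$ and $\operatorname{diam}(B)\le\operatorname{dist}(B,0)$. Let $\kappa\colon A\times B\to\mathbb{R}$ be asymptotically smooth with constants $C,\mu,s\ge 0$ and $\nu\in\mathbb{R}$, meaning that $\kappa$ is infinitely differentiable in each variable and for all $q'\in\mathbb{N}$ and all $(y,\xi)\in A\times B$ $$\left|y^{q'}\partial_y^{q'}\kappa(y,\xi)\right|\le C\,q'!\,\mu^{q'}(q')^{\nu}(y\xi)^{-s}\quad\text{and}\quad \left|\xi^{q'}\partial_\xi^{q'}\kappa(y,\xi)\right|\le C\,q'!\,\mu^{q'}(q')^{\nu}(y\xi)^{-s}.$$ Then $$\left\|\kappa-\mathcal{I}_q^{A\times B}\kappa\right\|_{C(A\times B)}\le \frac{C\mu^q q^{\nu}}{2^{2q-1}}\left(2+\frac{2}{\pi}\log q\right)\bigl(\operatorname{dist}(A,0)\operatorname{dist}(B,0)\bigr)^{-s}.$$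
   Context: For $q\in\mathbb{N}$ let $t_j=\cos\frac{(2j+1)\pi}{2q}$, $j=0,\dots,q-1$ (zeros of the $q$-th Chebyshev polynomial of the first kind). For an interval $A=[a,b]$, $a<b$, let $\operatorname{diam}A=b-a$, $c^A=\frac{a+b}{2}$, and the Chebyshev nodes $y_j^A=c^A+\frac{\operatorname{diam}A}{2}t_j$, $j=0,\dots,q-1$. The Lagrange polynomials are $L_r^A(y)=\prod_{j\ne r}\frac{y-y_j^A}{y_r^A-y_j^A}$, $r=0,\dots,q-1$, and the interpolation operator is $\mathcal{I}_q^A g=\sum_{j=0}^{q-1}g(y_j^A)L_j^A$ for $g\in C(A)$. For intervals $A,B$ and $\kappa\colon A\times B\to\mathbb{R}$, the tensor interpolation is $\mathcal{I}_q^{A\times B}\kappa(y,\xi)=\sum_{s=0}^{q-1}\sum_{r=0}^{q-1}L_s^A(y)\,\kappa(y_s^A,\xi_r^B)\,L_r^B(\xi)$, where $\xi_r^B$ are the Chebyshev nodes of $B$. $\|\cdot\|_{C(A\times B)}$ is the supremum norm, and $\operatorname{dist}(A,0)=\min_{y\in A}|y|$. *)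

theory Defs
  imports "HOL-Analysis.Analysis"
begin

definition cheb_node :: "nat \<Rightarrow> real \<Rightarrow> real \<Rightarrow> nat \<Rightarrow> real" where
  "cheb_node q a b j = (a + b) / 2 + (b - a) / 2 * cos ((2 * real j + 1) * pi / (2 * real q))"

definition lagrange_cheb :: "nat \<Rightarrow> real \<Rightarrow> real \<Rightarrow> nat \<Rightarrow> real \<Rightarrow> real" where
  "lagrange_cheb q a b r y =
     (\<Prod>j\<in>{0..<q} - {r}. (y - cheb_node q a b j) / (cheb_node q a b r - cheb_node q a b j))"

definition tensor_interp ::
  "nat \<Rightarrow> real \<Rightarrow> real \<Rightarrow> real \<Rightarrow> real \<Rightarrow> (real \<Rightarrow> real \<Rightarrow> real) \<Rightarrow> real \<Rightarrow> real \<Rightarrow> real" where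
  "tensor_interp q a b c d \<kappa> y \<xi> =
     (\<Sum>s<q. \<Sum>r<q. lagrange_cheb q a b s y * \<kappa> (cheb_node q a b s) (cheb_node q c d r)
                     * lagrange_cheb q c d r \<xi>)"

text \<open>Asymptotic smoothness on A x B: kappa is infinitely differentiable in each variable
  (Dy n, Dx n are the n-th partial derivatives, one-sided at endpoints, i.e. within A resp. B),
  and the derivative bounds hold for all q' >= 1.\<close>
definition asymptotically_smooth ::
  "real set \<Rightarrow> real set \<Rightarrow> (real \<Rightarrow> real \<Rightarrow> real) \<Rightarrow> real \<Rightarrow> real \<Rightarrow> real \<Rightarrow> real \<Rightarrow> bool" where
  "asymptotically_smooth A B \<kappa> C \<mu> \<nu> s \<longleftrightarrow>
    (\<exists>Dy Dx :: nat \<Rightarrow> real \<Rightarrow> real \<Rightarrow> real.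
       (\<forall>y\<in>A. \<forall>\<xi>\<in>B. Dy 0 y \<xi> = \<kappa> y \<xi> \<and> Dx 0 y \<xi> = \<kappa> y \<xi>) \<and>
       (\<forall>n. \<forall>y\<in>A. \<forall>\<xi>\<in>B.
          ((\<lambda>t. Dy n t \<xi>) has_real_derivative Dy (Suc n) y \<xi>) (at y within A) \<and>
          ((\<lambda>t. Dx n y t) has_real_derivative Dx (Suc n) y \<xi>) (at \<xi> within B)) \<and>
       (\<forall>n\<ge>1. \<forall>y\<in>A. \<forall>\<xi>\<in>B.
          \<bar>y ^ n * Dy n y \<xi>\<bar> \<le> C * fact n * \<mu> ^ n * real n powr \<nu> * (y * \<xi>) powr (- s) \<and>
          \<bar>\<xi> ^ n * Dx n y \<xi>\<bar> \<le> C * fact n * \<mu> ^ n * real n powr \<nu> * (y * \<xi>) powr (- s)))"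

end

theory Submission
  imports Defs "HOL-Computational_Algebra.Polynomial"
begin

lemma rolle_step:
  fixes f f' :: "real \<Rightarrow> real"
  assumes cont: "continuous_on {a..b} f"
    and der: "\<And>x. a < x \<Longrightarrow> x < b \<Longrightarrow> (f has_real_derivative f' x) (at x)"
  shows "finite S \<Longrightarrow> S \<subseteq> {a..b} \<Longrightarrow> card S = Suc k \<Longrightarrow> (\<forall>x\<in>S. f x = 0) \<Longrightarrow>
    \<exists>T. finite T \<and> card T = k \<and> T \<subseteq> {a..b} \<and> (\<forall>x\<in>T. x < Max S) \<and> (\<forall>x\<in>T. f' x = 0)"
proof (induction k arbitrary: S)
  case 0
  then show ?case by (intro exI[of _ "{}"]) auto
next
  case (Suc k)
  define m where "m = Max S"
  define S0 where "S0 = S - {m}"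
  have ne: "S \<noteq> {}" using Suc.prems by auto
  have mS: "m \<in> S" using Suc.prems ne m_def by auto
  have cS0: "card S0 = Suc k" using Suc.prems mS S0_def by auto
  have fS0: "finite S0" "S0 \<subseteq> {a..b}" "\<forall>x\<in>S0. f x = 0" using Suc.prems S0_def by auto
  obtain T0 where T0: "finite T0" "card T0 = k" "T0 \<subseteq> {a..b}" "\<forall>x\<in>T0. x < Max S0" "\<forall>x\<in>T0. f' x = 0"
    using Suc.IH[OF fS0(1,2) cS0 fS0(3)] by blast
  define m0 where "m0 = Max S0"
  have ne0: "S0 \<noteq> {}" using cS0 by auto
  have m0S0: "m0 \<in> S0" using fS0 ne0 m0_def by auto
  have m0m: "m0 < m"
  proof -
    have "m0 \<in> S" "m0 \<noteq> m" using m0S0 S0_def by auto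
    moreover then have "m0 \<le> m" unfolding m_def using Suc.prems(1) by (intro Max_ge) auto
    ultimately show ?thesis by auto
  qed
  have "m0 \<in> {a..b}" "m \<in> {a..b}" using m0S0 S0_def Suc.prems(2) mS by blast+
  then have ab: "a \<le> m0" "m \<le> b" by auto
  have "\<exists>z. m0 < z \<and> z < m \<and> DERIV f z :> 0"
  proof (rule Rolle[OF m0m])
    show "f m0 = f m" using fS0(3) m0S0 mS Suc.prems(4) by auto
    show "continuous_on {m0..m} f" using ab by (intro continuous_on_subset[OF cont]) auto
    show "\<And>x. m0 < x \<Longrightarrow> x < m \<Longrightarrow> f differentiable at x"
      using der ab real_differentiable_def by (meson le_less_trans less_le_trans)
  qed
  then obtain z where z: "m0 < z" "z < m" "DERIV f z :> 0" by blast
  have f'z: "f' z = 0" using der[of z] z ab by (meson DERIV_unique le_less_trans less_le_trans)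
  have znot: "z \<notin> T0" using T0(4) z m0_def by auto
  show ?case
  proof (intro exI[of _ "insert z T0"] conjI)
    show "card (insert z T0) = Suc k" using T0 znot by auto
    show "insert z T0 \<subseteq> {a..b}" using T0 z ab by auto
    show "\<forall>x\<in>insert z T0. x < Max S" using T0(4) z m0m m_def m0_def by auto
    show "\<forall>x\<in>insert z T0. f' x = 0" using T0 f'z by auto
  qed (use T0 in auto)
qed

lemma rolle_gen:
  fixes F :: "nat \<Rightarrow> real \<Rightarrow> real"
  assumes der: "\<And>k x. k < n \<Longrightarrow> a < x \<Longrightarrow> x < b \<Longrightarrow> (F k has_real_derivative F (Suc k) x) (at x)"
    and cont: "\<And>k. k < n \<Longrightarrow> continuous_on {a..b} (F k)"
    and S: "finite S" "S \<subseteq> {a..b}" "card S = Suc n" "\<forall>x\<in>S. F 0 x = 0"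
  shows "\<exists>z\<in>{a..b}. F n z = 0"
proof -
  have "m \<le> n \<Longrightarrow> \<exists>T. finite T \<and> card T = Suc (n - m) \<and> T \<subseteq> {a..b} \<and> (\<forall>x\<in>T. F m x = 0)" for m
  proof (induction m)
    case 0 then show ?case using S by auto
  next
    case (Suc m)
    then obtain T where T: "finite T" "card T = Suc (n - m)" "T \<subseteq> {a..b}" "\<forall>x\<in>T. F m x = 0" by auto
    have "n - m = Suc (n - Suc m)" using Suc.prems by auto
    have "m < n" using Suc.prems by auto
    have "\<exists>T'. finite T' \<and> card T' = n - m \<and> T' \<subseteq> {a..b} \<and> (\<forall>x\<in>T'. x < Max T) \<and> (\<forall>x\<in>T'. F (Suc m) x = 0)"
      by (rule rolle_step[OF cont der, of m T "n - m"]) (use T \<open>m < n\<close> in auto)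
    then show ?case using \<open>n - m = Suc (n - Suc m)\<close> by metis
  qed
  from this[of n] obtain T where "finite T" "card T = Suc 0" "T \<subseteq> {a..b}" "\<forall>x\<in>T. F n x = 0" by auto
  then obtain z where "T = {z}" using card_1_singletonE[of T] by auto
  then show ?thesis using \<open>T \<subseteq> {a..b}\<close> \<open>\<forall>x\<in>T. F n x = 0\<close> by auto
qed

lemma pderiv_iter_const:
  fixes p :: "real poly"
  shows "degree p \<le> n \<Longrightarrow> (pderiv ^^ n) p = [: fact n * coeff p n :]"
proof (induction n arbitrary: p)
  case 0
  then obtain c where "p = [:c:]" using degree0_coeffs by auto
  then show ?case by simp
next
  case (Suc n)
  have "degree (pderiv p) \<le> n" using Suc.prems by (simp add: degree_pderiv)
  then have "(pderiv ^^ n) (pderiv p) = [: fact n * coeff (pderiv p) n :]" by (rule Suc.IH)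
  moreover have "(pderiv ^^ Suc n) p = (pderiv ^^ n) (pderiv p)" by (rule funpow_Suc_right[THEN fun_cong, unfolded o_apply])
  moreover have "fact n * coeff (pderiv p) n = fact (Suc n) * coeff p (Suc n)" by (simp add: coeff_pderiv)
  ultimately show ?case by simp
qed

lemma interp_error:
  fixes D :: "nat \<Rightarrow> real \<Rightarrow> real" and ys :: "nat \<Rightarrow> real"
  assumes ab: "a < b" and q1: "q \<ge> 1" and inj: "inj_on ys {..<q}" and ysab: "\<And>j. j < q \<Longrightarrow> ys j \<in> {a..b}"
    and der: "\<And>n x. x \<in> {a..b} \<Longrightarrow> (D n has_real_derivative D (Suc n) x) (at x within {a..b})"
    and y: "y \<in> {a..b}"
  shows "\<exists>\<eta>\<in>{a..b}. D 0 y - (\<Sum>j<q. D 0 (ys j) * (\<Prod>i\<in>{0..<q}-{j}. (y - ys i)/(ys j - ys i)))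
            = D q \<eta> / fact q * (\<Prod>j<q. (y - ys j))"
proof -
  define L where "L j = (\<Prod>i\<in>{0..<q}-{j}. smult (1/(ys j - ys i)) [:-ys i, 1:])" for j
  define P where "P = (\<Sum>j<q. smult (D 0 (ys j)) (L j))"
  define W where "W = (\<Prod>j<q. [:-ys j, 1:])"
  have polyL: "poly (L j) x = (\<Prod>i\<in>{0..<q}-{j}. (x - ys i)/(ys j - ys i))" for j x
    unfolding L_def poly_prod by (intro prod.cong) (auto simp: diff_divide_distrib)
  have polyP: "poly P x = (\<Sum>j<q. D 0 (ys j) * (\<Prod>i\<in>{0..<q}-{j}. (x - ys i)/(ys j - ys i)))" for x
    unfolding P_def poly_sum by (simp add: polyL)
  have polyW: "poly W x = (\<Prod>j<q. (x - ys j))" for x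
    unfolding W_def poly_prod by simp
  have Lnode: "(\<Prod>i\<in>{0..<q}-{j}. (ys k - ys i)/(ys j - ys i)) = (if j = k then 1 else 0)"
    if "j < q" "k < q" for j k
  proof (cases "j = k")
    case True
    have "(ys k - ys i)/(ys j - ys i) = 1" if "i \<in> {0..<q}-{j}" for i
    proof -
      have "ys j \<noteq> ys i" using inj \<open>j < q\<close> that by (auto dest: inj_onD)
      then show ?thesis using True by simp
    qed
    then show ?thesis using True by simp
  next
    case False
    then have "k \<in> {0..<q}-{j}" using that by auto
    then have "(\<Prod>i\<in>{0..<q}-{j}. (ys k - ys i)/(ys j - ys i)) = 0" by (intro prod_zero) auto
    then show ?thesis using False by simp
  qed
  have Pnode: "poly P (ys k) = D 0 (ys k)" if "k < q" for k
  proof -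
    have "poly P (ys k) = (\<Sum>j<q. D 0 (ys j) * (if j = k then 1 else 0))"
      unfolding polyP using Lnode that by (intro sum.cong) auto
    also have "\<dots> = (\<Sum>j<q. if k = j then D 0 (ys k) else 0)" by (intro sum.cong) auto
    also have "\<dots> = D 0 (ys k)" using that by simp
    finally show ?thesis .
  qed
  have degL: "degree (L j) \<le> q - 1" if "j < q" for j
  proof -
    have "degree (L j) \<le> (\<Sum>i\<in>{0..<q}-{j}. degree (smult (1/(ys j - ys i)) [:-ys i, 1:]))"
      unfolding L_def by (rule order.trans[OF degree_prod_sum_le]) auto
    also have "\<dots> \<le> (\<Sum>i\<in>{0..<q}-{j}. 1)"
      by (intro sum_mono) (simp add: degree_smult_le)
    also have "\<dots> = q - 1" using that by simp
    finally show ?thesis .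
  qed
  have degP: "degree P \<le> q - 1"
    unfolding P_def
    by (intro degree_sum_le) (use degL in \<open>auto intro: order.trans[OF degree_smult_le]\<close>)
  have degW: "degree W = q" and cW: "coeff W q = 1"
  proof -
    have "degree W = (\<Sum>j<q. degree [:-ys j, 1:])" unfolding W_def
      by (rule degree_prod_eq_sum_degree) auto
    then show "degree W = q" by simp
    have "lead_coeff W = (\<Prod>j<q. lead_coeff [:-ys j, 1:])" unfolding W_def by (rule lead_coeff_prod)
    then show "coeff W q = 1" using \<open>degree W = q\<close> by simp
  qed
  show ?thesis
  proof (cases "y \<in> ys ` {..<q}")
    case True
    then obtain k where k: "k < q" "y = ys k" by auto
    have "(\<Prod>j<q. (y - ys j)) = 0" using k by (intro prod_zero) auto
    moreover have "D 0 y - poly P y = 0" using Pnode k by simp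
    ultimately show ?thesis using polyP ab by (intro bexI[of _ a]) auto
  next
    case False
    have W0: "poly W y \<noteq> 0" unfolding polyW using False by (auto simp: prod_zero_iff)
    define K where "K = (D 0 y - poly P y) / poly W y"
    define F where "F k x = D k x - poly ((pderiv ^^ k) P) x - K * poly ((pderiv ^^ k) W) x" for k x
    have derF: "(F k has_real_derivative F (Suc k) x) (at x)" if "a < x" "x < b" for k x
    proof -
      have "(D k has_real_derivative D (Suc k) x) (at x)"
        using der[of x k] that at_within_Icc_at[of a x b] by auto
      then show ?thesis unfolding F_def
        by (auto intro!: derivative_eq_intros)
    qed
    have contF: "continuous_on {a..b} (F k)" for k
    proof -
      have "continuous_on {a..b} (D k)" by (rule DERIV_continuous_on[OF der])
      then show ?thesis unfolding F_def by (intro continuous_intros)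
    qed
    define S where "S = insert y (ys ` {..<q})"
    have cardS: "card S = Suc q" unfolding S_def using False inj by (simp add: card_image)
    have S0: "\<forall>x\<in>S. F 0 x = 0"
    proof
      fix x assume "x \<in> S"
      then consider "x = y" | k where "k < q" "x = ys k" unfolding S_def by auto
      then show "F 0 x = 0"
      proof cases
        case 1 then show ?thesis unfolding F_def K_def using W0 by simp
      next
        case 2
        have "poly W x = 0" unfolding polyW using 2 by (intro prod_zero) auto
        then show ?thesis unfolding F_def using Pnode 2 by simp
      qed
    qed
    have "S \<subseteq> {a..b}" unfolding S_def using y ysab by auto
    obtain \<eta> where \<eta>: "\<eta> \<in> {a..b}" "F q \<eta> = 0"
      using \<open>S \<subseteq> {a..b}\<close> rolle_gen[where n=q and F=F and a=a and b=b and S=S, OF derF contF] cardS S0 unfolding S_def by auto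
    have "degree P < q" using degP q1 by linarith
    then have "coeff P q = 0" by (rule coeff_eq_0)
    moreover have "(pderiv ^^ q) P = [: fact q * coeff P q :]" using pderiv_iter_const[of P q] \<open>degree P < q\<close> by simp
    ultimately have "(pderiv ^^ q) P = 0" by simp
    moreover have "(pderiv ^^ q) W = [: fact q :]" using pderiv_iter_const[of W q] degW cW by simp
    ultimately have "D q \<eta> = K * fact q" using \<eta>(2) unfolding F_def by simp
    then have "D 0 y - poly P y = D q \<eta> / fact q * poly W y" unfolding K_def using W0 by simp
    then show ?thesis using \<eta>(1) polyP polyW by auto
  qed
qed

definition thn :: "nat \<Rightarrow> nat \<Rightarrow> real" where
  "thn q j = (2 * real j + 1) * pi / (2 * real q)"

fun chebT :: "nat \<Rightarrow> real poly" where
  "chebT 0 = 1"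
| "chebT (Suc 0) = [:0, 1:]"
| "chebT (Suc (Suc n)) = [:0, 2:] * chebT (Suc n) - chebT n"

lemma poly_chebT_cos: "poly (chebT n) (cos x) = cos (real n * x)"
proof (induction n rule: chebT.induct)
  case 1 then show ?case by simp
next
  case 2 then show ?case by simp
next
  case (3 n)
  have "cos (real (Suc (Suc n)) * x) = 2 * cos x * cos (real (Suc n) * x) - cos (real n * x)"
  proof -
    have "cos (real (Suc n) * x + x) + cos (real (Suc n) * x - x) = 2 * cos x * cos (real (Suc n) * x)"
      by (simp add: cos_add cos_diff)
    moreover have "real (Suc n) * x + x = real (Suc (Suc n)) * x" "real (Suc n) * x - x = real n * x"
      by (simp_all add: algebra_simps)
    ultimately show ?thesis by simp
  qed
  then show ?case using 3 by simp
qed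

lemma coeff_chebT: "(\<forall>k>n. coeff (chebT n) k = 0) \<and> coeff (chebT n) n = (if n = 0 then 1 else 2 ^ (n - 1))"
proof (induction n rule: chebT.induct)
  case 1 then show ?case by (simp add: coeff_eq_0)
next
  case 2 then show ?case by (auto simp: coeff_pCons split: nat.splits)
next
  case (3 n)
  have c2: "coeff ([:0, 2:] * p) (Suc k) = 2 * coeff p k" for p :: "real poly" and k
    by simp
  show ?case
  proof (intro conjI allI impI)
    fix k assume k: "k > Suc (Suc n)"
    then obtain k' where "k = Suc k'" "k' > Suc n" by (cases k) auto
    then show "coeff (chebT (Suc (Suc n))) k = 0" using 3 by (simp add: c2)
  next
    show "coeff (chebT (Suc (Suc n))) (Suc (Suc n)) = (if Suc (Suc n) = 0 then 1 else 2 ^ (Suc (Suc n) - 1))"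
      using 3 by (simp add: c2)
  qed
qed

lemma degree_chebT: "degree (chebT n) = n"
proof (rule antisym)
  show "degree (chebT n) \<le> n" using coeff_chebT[of n] by (intro degree_le) auto
  show "n \<le> degree (chebT n)" using coeff_chebT[of n] by (intro le_degree) auto
qed

lemma thn_range: "j < q \<Longrightarrow> 0 < thn q j \<and> thn q j < pi"
proof -
  assume j: "j < q"
  have h: "(2*real j+1) * pi < (2*real q) * pi" by (intro mult_strict_right_mono) (use j in auto)
  have "0 < (2*real j+1) * pi" by simp
  then show ?thesis unfolding thn_def using h j by (auto simp: pos_divide_less_eq)
qed

lemma q_thn: "q > 0 \<Longrightarrow> real q * thn q j = real j * pi + pi / 2"
  unfolding thn_def by (simp add: field_simps)

lemma cos_q_thn: "q > 0 \<Longrightarrow> cos (real q * thn q j) = 0"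
  by (simp add: q_thn cos_add)

lemma sin_q_thn: "q > 0 \<Longrightarrow> \<bar>sin (real q * thn q j)\<bar> = 1"
  by (simp add: q_thn sin_add)

lemma thn_inj: "i < q \<Longrightarrow> j < q \<Longrightarrow> cos (thn q i) = cos (thn q j) \<Longrightarrow> i = j"
proof -
  assume ij: "i < q" "j < q" "cos (thn q i) = cos (thn q j)"
  have r1: "0 \<le> thn q i" "thn q i \<le> pi" using thn_range[OF ij(1)] by auto
  have r2: "0 \<le> thn q j" "thn q j \<le> pi" using thn_range[OF ij(2)] by auto
  have "thn q i = thn q j" using cos_inj_pi[OF r1 r2 ij(3)] .
  then have "(2 * real i + 1) * pi / (2 * real q) = (2 * real j + 1) * pi / (2 * real q)" unfolding thn_def .
  then have "(2 * real i + 1) * pi = (2 * real j + 1) * pi" using ij(1) by (simp add: divide_cancel_right)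
  then show "i = j" by simp
qed

definition omega :: "nat \<Rightarrow> real poly" where
  "omega q = (\<Prod>j<q. [:- cos (thn q j), 1:])"

lemma chebT_omega:
  assumes q: "q \<ge> 1"
  shows "chebT q = smult (2 ^ (q - 1)) (omega q)"
proof (rule ccontr)
  define R where "R = chebT q - smult (2 ^ (q - 1)) (omega q)"
  assume "chebT q \<noteq> smult (2 ^ (q - 1)) (omega q)"
  then have R0: "R \<noteq> 0" unfolding R_def by simp
  have degW: "degree (omega q) = q" and cW: "coeff (omega q) q = 1"
  proof -
    have "degree (omega q) = (\<Sum>j<q. degree [:- cos (thn q j), 1:])" unfolding omega_def
      by (rule degree_prod_eq_sum_degree) auto
    then show "degree (omega q) = q" by simp
    have "lead_coeff (omega q) = (\<Prod>j<q. lead_coeff [:- cos (thn q j), 1:])" unfolding omega_def by (rule lead_coeff_prod)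
    then show "coeff (omega q) q = 1" using \<open>degree (omega q) = q\<close> by simp
  qed
  have "\<forall>k\<ge>q. coeff R k = 0"
  proof (intro allI impI)
    fix k assume "k \<ge> q"
    then consider "k = q" | "k > q" by linarith
    then show "coeff R k = 0"
    proof cases
      case 1 then show ?thesis unfolding R_def using coeff_chebT[of q] q cW by simp
    next
      case 2 then show ?thesis unfolding R_def using coeff_chebT[of q] degW by (simp add: coeff_eq_0)
    qed
  qed
  then have "degree R < q" using R0 q
    by (metis leading_coeff_0_iff not_le)
  moreover have "(\<lambda>j. cos (thn q j)) ` {..<q} \<subseteq> {x. poly R x = 0}"
  proof
    fix x assume "x \<in> (\<lambda>j. cos (thn q j)) ` {..<q}"
    then obtain j where j: "j < q" "x = cos (thn q j)" by auto
    have "poly (omega q) x = 0" unfolding omega_def poly_prod using j by (intro prod_zero) auto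
    moreover have "poly (chebT q) x = 0" using j poly_chebT_cos cos_q_thn q by simp
    ultimately show "x \<in> {x. poly R x = 0}" unfolding R_def by simp
  qed
  then have "card ((\<lambda>j. cos (thn q j)) ` {..<q}) \<le> card {x. poly R x = 0}"
    using poly_roots_finite[OF R0] by (intro card_mono) auto
  moreover have "card ((\<lambda>j. cos (thn q j)) ` {..<q}) = q"
    by (subst card_image) (auto intro!: inj_onI thn_inj)
  ultimately show False using card_poly_roots_bound[OF R0] by linarith
qed

lemma prod_cos_nodes:
  assumes "q \<ge> 1"
  shows "(\<Prod>j<q. (cos x - cos (thn q j))) = cos (real q * x) / 2 ^ (q - 1)"
proof -
  have "poly (chebT q) (cos x) = 2 ^ (q - 1) * poly (omega q) (cos x)"
    using chebT_omega[OF assms] by simp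
  then show ?thesis unfolding omega_def poly_prod using poly_chebT_cos[of q x] by (simp add: field_simps)
qed

lemma prod_nodes_bound:
  assumes "q \<ge> 1" "-1 \<le> t" "t \<le> 1"
  shows "\<bar>\<Prod>j<q. (t - cos (thn q j))\<bar> \<le> 1 / 2 ^ (q - 1)"
proof -
  have "t = cos (arccos t)" using assms by simp
  then have "(\<Prod>j<q. (t - cos (thn q j))) = cos (real q * arccos t) / 2 ^ (q - 1)"
    using prod_cos_nodes[OF assms(1)] by metis
  then show ?thesis by (simp add: divide_right_mono abs_cos_le_one) 
qed

lemma chebT_deriv: "poly (pderiv (chebT n)) (cos x) * sin x = real n * sin (real n * x)"
proof -
  have "((\<lambda>x. poly (chebT n) (cos x)) has_real_derivative poly (pderiv (chebT n)) (cos x) * (- sin x)) (at x)"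
    by (auto intro!: derivative_eq_intros DERIV_chain2[OF poly_DERIV])
  moreover have "(\<lambda>x. poly (chebT n) (cos x)) = (\<lambda>x. cos (real n * x))" by (simp add: poly_chebT_cos)
  moreover have "((\<lambda>x. cos (real n * x)) has_real_derivative - sin (real n * x) * real n) (at x)"
    by (auto intro!: derivative_eq_intros)
  ultimately have "poly (pderiv (chebT n)) (cos x) * (- sin x) = - sin (real n * x) * real n"
    using DERIV_unique by metis
  then show ?thesis by (simp add: algebra_simps)
qed

lemma prod_node_diff:
  assumes q: "q \<ge> 1" and j: "j < q"
  shows "(\<Prod>i\<in>{0..<q}-{j}. (cos (thn q j) - cos (thn q i))) * sin (thn q j) * 2 ^ (q - 1)
           = real q * sin (real q * thn q j)"
proof -
  define c where "c i = cos (thn q i)" for i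
  define Qj where "Qj = (\<Prod>i\<in>{..<q}-{j}. [:- c i, 1:])"
  have om: "omega q = [:- c j, 1:] * Qj"
    unfolding omega_def Qj_def c_def using j by (subst prod.remove[of _ j]) auto
  have "pderiv (omega q) = [:- c j, 1:] * pderiv Qj + Qj"
    unfolding om pderiv_mult by (simp add: pderiv_pCons)
  then have pd: "poly (pderiv (omega q)) (c j) = poly Qj (c j)" by simp
  have "poly (pderiv (chebT q)) (c j) = 2 ^ (q - 1) * poly Qj (c j)"
    using chebT_omega[OF q] pd by (simp add: pderiv_smult)
  moreover have "poly (pderiv (chebT q)) (c j) * sin (thn q j) = real q * sin (real q * thn q j)"
    unfolding c_def by (rule chebT_deriv)
  moreover have "poly Qj (c j) = (\<Prod>i\<in>{0..<q}-{j}. (cos (thn q j) - cos (thn q i)))"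
    unfolding Qj_def poly_prod c_def by (intro prod.cong) auto
  ultimately show ?thesis by (simp add: algebra_simps)
qed

lemma lagr_abs:
  assumes q: "q \<ge> 1" and j: "j < q" and nn: "\<And>i. i < q \<Longrightarrow> cos x \<noteq> cos (thn q i)"
  shows "\<bar>\<Prod>i\<in>{0..<q}-{j}. (cos x - cos (thn q i)) / (cos (thn q j) - cos (thn q i))\<bar>
          = \<bar>cos (real q * x)\<bar> * sin (thn q j) / (real q * \<bar>cos x - cos (thn q j)\<bar>)"
proof -
  define N where "N = (\<Prod>i\<in>{0..<q}-{j}. (cos x - cos (thn q i)))"
  define M where "M = (\<Prod>i\<in>{0..<q}-{j}. (cos (thn q j) - cos (thn q i)))"
  have "(\<Prod>i<q. (cos x - cos (thn q i))) = (cos x - cos (thn q j)) * N"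
    unfolding N_def using j by (subst prod.remove[of _ j]) (auto simp: atLeast0LessThan)
  then have N: "N * (cos x - cos (thn q j)) = cos (real q * x) / 2 ^ (q - 1)"
    using prod_cos_nodes[OF q] by (simp add: algebra_simps)
  have M: "M * sin (thn q j) * 2 ^ (q - 1) = real q * sin (real q * thn q j)"
    unfolding M_def by (rule prod_node_diff[OF q j])
  have s: "\<bar>sin (real q * thn q j)\<bar> = 1" using sin_q_thn q by simp
  have sj: "sin (thn q j) > 0" using thn_range[OF j] by (intro sin_gt_zero) auto
  have d: "cos x - cos (thn q j) \<noteq> 0" using nn j by auto
  have "(\<Prod>i\<in>{0..<q}-{j}. (cos x - cos (thn q i)) / (cos (thn q j) - cos (thn q i))) = N / M"
    unfolding N_def M_def by (rule prod_dividef)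
  moreover have hN: "\<bar>N\<bar> = \<bar>cos (real q * x)\<bar> / (2 ^ (q - 1) * \<bar>cos x - cos (thn q j)\<bar>)"
  proof -
    have "\<bar>N\<bar> * \<bar>cos x - cos (thn q j)\<bar> = \<bar>cos (real q * x)\<bar> / 2 ^ (q - 1)"
      using arg_cong[OF N, of abs] by (simp add: abs_mult abs_divide)
    then show ?thesis using d by (simp add: field_simps)
  qed
  moreover have hM: "\<bar>M\<bar> = real q / (sin (thn q j) * 2 ^ (q - 1))"
  proof -
    have "\<bar>M\<bar> * sin (thn q j) * 2 ^ (q - 1) = real q"
      using arg_cong[OF M, of abs] s sj by (simp add: abs_mult)
    then show ?thesis using sj by (simp add: field_simps)
  qed
  ultimately have "\<bar>\<Prod>i\<in>{0..<q}-{j}. (cos x - cos (thn q i)) / (cos (thn q j) - cos (thn q i))\<bar>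
     = (\<bar>cos (real q * x)\<bar> / (2 ^ (q - 1) * \<bar>cos x - cos (thn q j)\<bar>)) / (real q / (sin (thn q j) * 2 ^ (q - 1)))"
    by (simp add: abs_divide)
  also have "\<dots> = \<bar>cos (real q * x)\<bar> * sin (thn q j) / (real q * \<bar>cos x - cos (thn q j)\<bar>)"
    using sj d q by (simp add: field_simps)
  finally show ?thesis .
qed

lemma cot_split:
  assumes tj: "0 < tj" "tj < pi" and x: "0 \<le> x" "x \<le> pi" "x \<noteq> tj"
  shows "sin tj / \<bar>cos x - cos tj\<bar> \<le> (\<bar>cot ((tj - x) / 2)\<bar> + \<bar>cot ((tj + x) / 2)\<bar>) / 2"
proof -
  define A where "A = (tj + x) / 2"
  define B where "B = (tj - x) / 2"
  have sA: "sin A > 0" unfolding A_def using tj x by (intro sin_gt_zero) auto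
  have sB: "sin B \<noteq> 0"
  proof
    assume "sin B = 0"
    moreover have "- pi < B" "B < pi" unfolding B_def using tj x by auto
    ultimately have "B = 0" using sin_eq_0_pi by blast
    then show False unfolding B_def using x by auto
  qed
  have c: "cos x - cos tj = 2 * sin A * sin B"
    unfolding A_def B_def by (simp add: cos_diff_cos add.commute)
  have stj: "sin tj = sin A * cos B + cos A * sin B"
  proof -
    have "tj = A + B" unfolding A_def B_def by (simp add: field_simps)
    then show ?thesis by (simp add: sin_add)
  qed
  have "sin tj / (cos x - cos tj) = (cot B + cot A) / 2"
    unfolding c stj cot_def using sA sB by (simp add: field_simps)
  then have "sin tj / \<bar>cos x - cos tj\<bar> = \<bar>cot B + cot A\<bar> / 2"
  proof -
    have sge: "sin tj \<ge> 0" using tj by (simp add: sin_ge_zero)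
    assume E: "sin tj / (cos x - cos tj) = (cot B + cot A) / 2"
    have "sin tj / \<bar>cos x - cos tj\<bar> = \<bar>sin tj / (cos x - cos tj)\<bar>" using sge by (simp add: abs_divide)
    also have "\<dots> = \<bar>(cot B + cot A) / 2\<bar>" by (simp only: E)
    also have "\<dots> = \<bar>cot B + cot A\<bar> / 2" by simp
    finally show ?thesis .
  qed
  also have "\<dots> \<le> (\<bar>cot B\<bar> + \<bar>cot A\<bar>) / 2" by (simp add: abs_triangle_ineq divide_right_mono)
  finally show ?thesis unfolding A_def B_def .
qed

lemma thn_reflect: "q \<ge> 1 \<Longrightarrow> j < q \<Longrightarrow> thn q (2 * q - 1 - j) = 2 * pi - thn q j"
  unfolding thn_def by (simp add: of_nat_diff field_simps)

lemma abs_cot_pi_minus: "\<bar>cot (pi - y)\<bar> = \<bar>cot y\<bar>"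
  by (simp add: cot_def)

lemma cot_sum_reflect:
  assumes q: "q \<ge> 1"
  shows "(\<Sum>j<q. \<bar>cot ((thn q j + x) / 2)\<bar>) = (\<Sum>i\<in>{q..<2*q}. \<bar>cot ((thn q i - x) / 2)\<bar>)"
proof (rule sum.reindex_bij_witness[of _ "\<lambda>i. 2 * q - 1 - i" "\<lambda>j. 2 * q - 1 - j"])
  fix j assume j: "j \<in> {..<q}"
  have e: "thn q (2 * q - 1 - j) = 2 * pi - thn q j" using thn_reflect[OF q, of j] j by simp
  have "\<bar>cot ((thn q (2 * q - 1 - j) - x) / 2)\<bar> = \<bar>cot (pi - (thn q j + x) / 2)\<bar>"
    unfolding e by (rule arg_cong[where f="\<lambda>y. \<bar>cot y\<bar>"]) (simp add: field_simps)
  then show "\<bar>cot ((thn q (2 * q - 1 - j) - x) / 2)\<bar> = \<bar>cot ((thn q j + x) / 2)\<bar>"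
    by (simp only: abs_cot_pi_minus)
qed auto

lemma lebesgue_cot:
  assumes q: "q \<ge> 1" and x: "0 \<le> x" "x \<le> pi" and nn: "\<And>i. i < q \<Longrightarrow> cos x \<noteq> cos (thn q i)"
  shows "(\<Sum>j<q. \<bar>\<Prod>i\<in>{0..<q}-{j}. (cos x - cos (thn q i)) / (cos (thn q j) - cos (thn q i))\<bar>)
          \<le> \<bar>cos (real q * x)\<bar> / (2 * real q) * (\<Sum>i<2*q. \<bar>cot ((thn q i - x) / 2)\<bar>)"
proof -
  have "(\<Sum>j<q. \<bar>\<Prod>i\<in>{0..<q}-{j}. (cos x - cos (thn q i)) / (cos (thn q j) - cos (thn q i))\<bar>)
     = (\<Sum>j<q. \<bar>cos (real q * x)\<bar> / real q * (sin (thn q j) / \<bar>cos x - cos (thn q j)\<bar>))"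
    using lagr_abs[OF q _ nn] by (intro sum.cong) (auto simp: field_simps)
  also have "\<dots> \<le> (\<Sum>j<q. \<bar>cos (real q * x)\<bar> / real q * ((\<bar>cot ((thn q j - x) / 2)\<bar> + \<bar>cot ((thn q j + x) / 2)\<bar>) / 2))"
  proof (intro sum_mono mult_left_mono)
    fix j assume j: "j \<in> {..<q}"
    have "x \<noteq> thn q j" using nn j by auto
    then show "sin (thn q j) / \<bar>cos x - cos (thn q j)\<bar> \<le> (\<bar>cot ((thn q j - x) / 2)\<bar> + \<bar>cot ((thn q j + x) / 2)\<bar>) / 2"
      using thn_range[of j q] j x by (intro cot_split) auto
  qed simp
  also have "\<dots> = \<bar>cos (real q * x)\<bar> / (2 * real q) * ((\<Sum>j<q. \<bar>cot ((thn q j - x) / 2)\<bar>) + (\<Sum>j<q. \<bar>cot ((thn q j + x) / 2)\<bar>))"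
  proof -
    define K where "K = \<bar>cos (real q * x)\<bar>"
    have "\<And>j. K / real q * ((\<bar>cot ((thn q j - x) / 2)\<bar> + \<bar>cot ((thn q j + x) / 2)\<bar>) / 2)
       = K / (2 * real q) * \<bar>cot ((thn q j - x) / 2)\<bar> + K / (2 * real q) * \<bar>cot ((thn q j + x) / 2)\<bar>"
      by (simp add: add_divide_distrib distrib_left)
    then show ?thesis unfolding K_def[symmetric] by (simp add: sum.distrib sum_distrib_left sum_divide_distrib distrib_left add_divide_distrib mult.commute)
  qed
  also have "(\<Sum>j<q. \<bar>cot ((thn q j - x) / 2)\<bar>) + (\<Sum>j<q. \<bar>cot ((thn q j + x) / 2)\<bar>) = (\<Sum>i<2*q. \<bar>cot ((thn q i - x) / 2)\<bar>)"
  proof -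
    have "(\<Sum>i\<in>{0..<q}. \<bar>cot ((thn q i - x) / 2)\<bar>) + (\<Sum>i\<in>{q..<2*q}. \<bar>cot ((thn q i - x) / 2)\<bar>) = (\<Sum>i\<in>{0..<2*q}. \<bar>cot ((thn q i - x) / 2)\<bar>)"
      by (rule sum.atLeastLessThan_concat) auto
    then have "(\<Sum>i<2*q. \<bar>cot ((thn q i - x) / 2)\<bar>) = (\<Sum>i<q. \<bar>cot ((thn q i - x) / 2)\<bar>) + (\<Sum>i\<in>{q..<2*q}. \<bar>cot ((thn q i - x) / 2)\<bar>)"
      by (simp only: atLeast0LessThan)
    then show ?thesis using cot_sum_reflect[OF q] by simp
  qed
  finally show ?thesis .
qed

lemma N_nonneg:
  fixes a t :: real
  assumes a: "0 \<le> a" "a \<le> 1" and t: "0 \<le> t" "t \<le> pi"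
  shows "sin (a * t) * cos t \<le> a * cos (a * t) * sin t"
proof -
  define N where "N s = a * cos (a * s) * sin s - sin (a * s) * cos s" for s
  have "N 0 \<le> N t"
  proof (rule DERIV_nonneg_imp_nondecreasing[OF t(1)])
    fix s assume s: "0 \<le> s" "s \<le> t"
    have der: "(N has_real_derivative (1 - a^2) * sin (a * s) * sin s) (at s)"
      unfolding N_def by (auto intro!: derivative_eq_intros simp: power2_eq_square algebra_simps)
    have "a * s \<le> 1 * pi" using a s t by (intro mult_mono) auto
    then have "sin (a * s) \<ge> 0" using a s by (intro sin_ge_zero) auto
    moreover have "sin s \<ge> 0" using s t by (intro sin_ge_zero) auto
    moreover have "1 - a^2 \<ge> 0" using a by (simp add: power_le_one)
    ultimately show "\<exists>y. (N has_real_derivative y) (at s) \<and> 0 \<le> y" using der by (intro exI[of _ "(1 - a^2) * sin (a * s) * sin s"]) auto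
  qed
  moreover have "N 0 = 0" unfolding N_def by simp
  ultimately show ?thesis unfolding N_def by simp
qed

lemma ratio_mono:
  fixes a x y :: real
  assumes a: "0 \<le> a" "a \<le> 1" and xy: "0 < x" "x \<le> y" "y < pi"
  shows "sin (a * x) * sin y \<le> sin (a * y) * sin x"
proof -
  define R where "R s = sin (a * s) / sin s" for s
  have sp: "sin s > 0" if "x \<le> s" "s \<le> y" for s using that xy by (intro sin_gt_zero) auto
  have "R x \<le> R y"
  proof (rule DERIV_nonneg_imp_nondecreasing[OF xy(2)])
    fix s assume s: "x \<le> s" "s \<le> y"
    have ss: "sin s > 0" using sp[OF s] .
    have der: "(R has_real_derivative (a * cos (a * s) * sin s - sin (a * s) * cos s) / (sin s)^2) (at s)"
      unfolding R_def using ss by (auto intro!: derivative_eq_intros simp: power2_eq_square field_simps)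
    have "sin (a * s) * cos s \<le> a * cos (a * s) * sin s" using N_nonneg[OF a, of s] s xy by auto
    then have "0 \<le> (a * cos (a * s) * sin s - sin (a * s) * cos s) / (sin s)^2"
      by (intro divide_nonneg_nonneg) auto
    then show "\<exists>d. (R has_real_derivative d) (at s) \<and> 0 \<le> d" using der by blast
  qed
  then show ?thesis unfolding R_def using sp[of x] sp[of y] xy by (simp add: divide_simps mult.commute)
qed

lemma endpoint_ineq:
  fixes a :: real
  assumes a: "0 \<le> a" "a \<le> 1"
  shows "sin (a * (pi/8)) \<le> sqrt 2 * sin (pi * a / 4) * sin (pi / 8)"
proof -
  define y where "y = a * (pi/8)"
  have y: "0 \<le> y" "y \<le> pi/8" unfolding y_def using a by (auto intro: mult_left_le_one_le)
  have sy: "sin y \<ge> 0" using y by (intro sin_ge_zero) auto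
  have cy: "cos (pi/8) \<le> cos y" using y by (intro cos_monotone_0_pi_le) auto
  have "2 * sqrt 2 * cos (pi/8) * sin (pi/8) = sqrt 2 * sin (pi/4)"
  proof -
    have "sin (pi/4) = sin (2 * (pi/8))" by simp
    also have "\<dots> = 2 * sin (pi/8) * cos (pi/8)" by (rule sin_double)
    finally show ?thesis by (simp add: algebra_simps)
  qed
  also have "\<dots> = 1" by (simp add: sin_45)
  finally have one: "2 * sqrt 2 * cos (pi/8) * sin (pi/8) = 1" .
  have s8: "sin (pi/8) \<ge> 0" by (intro sin_ge_zero) auto
  have "sin y = sin y * (2 * sqrt 2 * cos (pi/8) * sin (pi/8))" using one by simp
  also have "\<dots> \<le> sin y * (2 * sqrt 2 * cos y * sin (pi/8))"
    using sy s8 cy by (intro mult_left_mono mult_right_mono) auto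
  also have "\<dots> = sqrt 2 * (2 * sin y * cos y) * sin (pi/8)" by (simp add: algebra_simps)
  also have "2 * sin y * cos y = sin (pi * a / 4)"
    using sin_double[of y] unfolding y_def by (simp add: algebra_simps)
  finally show ?thesis unfolding y_def .
qed

lemma key_trig:
  fixes a x :: real
  assumes a: "0 \<le> a" "a \<le> 1" and x: "0 < x" "x \<le> pi/8"
  shows "sin (a * x) \<le> sqrt 2 * sin (pi * a / 4) * sin x"
proof -
  have "sin (a * x) * sin (pi/8) \<le> sin (a * (pi/8)) * sin x"
    using ratio_mono[OF a x(1) x(2)] by simp
  also have "\<dots> \<le> sqrt 2 * sin (pi * a / 4) * sin (pi / 8) * sin x"
    using endpoint_ineq[OF a] x by (intro mult_right_mono) (auto intro: sin_ge_zero)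
  finally have "sin (a * x) * sin (pi/8) \<le> (sqrt 2 * sin (pi * a / 4) * sin x) * sin (pi/8)"
    by (simp add: algebra_simps)
  moreover have "sin (pi/8) > 0" by (intro sin_gt_zero) auto
  ultimately show ?thesis by simp
qed

lemma pair_ineq:
  fixes h u :: real and k :: nat
  assumes h: "0 < h" "h \<le> pi/4" and u: "0 < u" "u < 1" and k: "(real k + 1) * h \<le> pi/2"
  shows "sin (pi * u) * (cot (h * (real k + u)) + cot (h * (real k + 1 - u))) \<le> 2 * cot (h * (real k + 1/2))"
proof -
  define c where "c = h * (real k + 1/2)"
  define e where "e = h * (u - 1/2)"
  have A: "h * (real k + u) = c + e" and B: "h * (real k + 1 - u) = c - e"
    unfolding c_def e_def by (simp_all add: algebra_simps)
  have kh: "real k * h \<ge> 0" using h by simp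
  have hu: "0 < h * u" "h * u < h" using h u by (simp_all add: mult_strict_left_mono[of u 1 h, simplified])
  have ce1: "c + e = h * real k + h * u" unfolding c_def e_def by (simp add: algebra_simps)
  have ce2: "c - e = h * real k + h - h * u" unfolding c_def e_def by (simp add: algebra_simps)
  have kk: "h * real k + h \<le> pi / 2" using k by (simp add: algebra_simps)
  have kh': "h * real k \<ge> 0" using h by simp
  have Apos: "0 < c + e" "c + e < pi" unfolding ce1 using hu kk kh' pi_gt_zero by linarith+
  have Bpos: "0 < c - e" "c - e < pi" unfolding ce2 using hu kk kh' pi_gt_zero by linarith+
  have sA: "sin (c + e) > 0" using Apos by (intro sin_gt_zero) auto
  have sB: "sin (c - e) > 0" using Bpos by (intro sin_gt_zero) auto
  have c1: "h / 2 \<le> c" "c \<le> pi / 2 - h / 2" unfolding c_def using h kh k by (auto simp: algebra_simps)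
  have sc: "sin c > 0" using c1 h by (intro sin_gt_zero) auto
  have s2c: "sin (2 * c) \<ge> 0" using c1 h by (intro sin_ge_zero) auto
  have sum: "cot (c + e) + cot (c - e) = sin (2 * c) / (sin (c + e) * sin (c - e))"
  proof -
    have "sin ((c + e) + (c - e)) = sin (c + e) * cos (c - e) + cos (c + e) * sin (c - e)" by (rule sin_add)
    moreover have "(c + e) + (c - e) = 2 * c" by simp
    ultimately show ?thesis unfolding cot_def using sA sB by (simp add: field_simps)
  qed
  have prod: "sin (c + e) * sin (c - e) = sin c ^ 2 - sin e ^ 2"
  proof -
    have "sin (c + e) * sin (c - e) = sin c ^ 2 * cos e ^ 2 - cos c ^ 2 * sin e ^ 2"
      by (simp add: sin_add sin_diff algebra_simps power2_eq_square)
    also have "\<dots> = sin c ^ 2 - sin e ^ 2" unfolding cos_squared_eq by (simp add: algebra_simps)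
    finally show ?thesis .
  qed
  have twocot: "2 * cot c = sin (2 * c) / sin c ^ 2"
    unfolding cot_def sin_double using sc by (simp add: field_simps power2_eq_square)
  define aw where "aw = \<bar>u - 1/2\<bar>"
  have aw: "0 \<le> aw" "aw \<le> 1/2" unfolding aw_def using u by (auto simp: abs_if)
  have Kt: "sin ((2 * aw) * (h / 2)) \<le> sqrt 2 * sin (pi * (2 * aw) / 4) * sin (h / 2)"
    using aw h by (intro key_trig) auto
  have e1: "(2 * aw) * (h / 2) = h * aw" "pi * (2 * aw) / 4 = pi * aw / 2" by simp_all
  have shaw: "sin (h * aw) \<ge> 0"
  proof -
    have "h * aw \<le> (pi/4) * 1" using h aw by (intro mult_mono) auto
    then show ?thesis using h aw by (intro sin_ge_zero) auto
  qed
  have se: "sin e ^ 2 = sin (h * aw) ^ 2"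
  proof (cases "u - 1/2 \<ge> 0")
    case True then show ?thesis unfolding e_def aw_def by simp
  next
    case False
    then have "h * aw = - e" unfolding e_def aw_def by (simp add: algebra_simps)
    then show ?thesis by simp
  qed
  have "sin e ^ 2 \<le> (sqrt 2 * sin (pi * aw / 2) * sin (h / 2)) ^ 2"
    unfolding se using Kt shaw unfolding e1 by (intro power_mono) auto
  also have "\<dots> = 2 * sin (pi * aw / 2) ^ 2 * sin (h / 2) ^ 2" by (simp add: power_mult_distrib)
  also have "\<dots> \<le> 2 * sin (pi * aw / 2) ^ 2 * sin c ^ 2"
  proof (intro mult_left_mono power_mono)
    show "0 \<le> sin (h / 2)" using h by (intro sin_ge_zero) auto
    show "sin (h / 2) \<le> sin c" using c1 h by (intro sin_monotone_2pi_le) auto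
  qed auto
  also have "2 * sin (pi * aw / 2) ^ 2 = 1 - sin (pi * u)"
  proof -
    have "cos (2 * (pi * aw / 2)) = 1 - 2 * sin (pi * aw / 2) ^ 2" by (rule cos_double_sin)
    moreover have "cos (2 * (pi * aw / 2)) = sin (pi * u)"
    proof -
      have "cos (2 * (pi * aw / 2)) = cos (pi * (u - 1/2))"
      proof (cases "u - 1/2 \<ge> 0")
        case True
        then have "2 * (pi * aw / 2) = pi * (u - 1/2)" unfolding aw_def by simp
        then show ?thesis by simp
      next
        case False
        then have "aw = 1/2 - u" unfolding aw_def by simp
        then have "2 * (pi * aw / 2) = - (pi * (u - 1/2))" by (simp add: right_diff_distrib)
        then show ?thesis by simp
      qed
      also have "\<dots> = sin (pi * u)"
        by (simp add: cos_diff algebra_simps)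
      finally show ?thesis .
    qed
    ultimately show ?thesis by simp
  qed
  finally have key: "sin (pi * u) * sin c ^ 2 \<le> sin (c + e) * sin (c - e)" unfolding prod by (simp add: algebra_simps)
  define P where "P = sin (c + e) * sin (c - e)"
  have P0: "P > 0" unfolding P_def using sA sB by simp
  have "sin (pi * u) * (cot (c + e) + cot (c - e)) = sin (pi * u) * sin (2 * c) / P"
    unfolding sum P_def by simp
  also have "\<dots> \<le> sin (2 * c) / sin c ^ 2"
  proof -
    have "sin (pi * u) * sin (2 * c) * sin c ^ 2 = (sin (pi * u) * sin c ^ 2) * sin (2 * c)" by simp
    also have "\<dots> \<le> P * sin (2 * c)" using key s2c unfolding P_def by (intro mult_right_mono) auto
    finally show ?thesis using P0 sc by (simp add: divide_simps mult.commute)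
  qed
  also have "\<dots> = 2 * cot c" by (simp add: twocot)
  finally show ?thesis unfolding A B c_def by simp
qed

lemma sq_step: "0 \<le> (a::real) \<Longrightarrow> a \<le> r \<Longrightarrow> r * r \<le> r' \<Longrightarrow> a ^ 2 \<le> r'"
  by (metis le_trans mult_mono power2_eq_square order.trans)

lemma ln_pi_half: "0.45 \<le> ln (pi / 2)"
proof -
  define t :: real where "t = 0.45 / 128"
  define a where "a = 1 + t + t\<^sup>2"
  have a0: "0 \<le> a" "a \<le> 1.0035281" unfolding a_def t_def by (simp_all add: power2_eq_square)
  have b1: "a ^ 2 \<le> 1.0070688" by (rule sq_step[OF a0]) simp
  have b2: "(a ^ 2) ^ 2 \<le> 1.0141877" by (rule sq_step[OF _ b1]) simp_all
  have b3: "((a ^ 2) ^ 2) ^ 2 \<le> 1.0285768" by (rule sq_step[OF _ b2]) simp_all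
  have b4: "(((a ^ 2) ^ 2) ^ 2) ^ 2 \<le> 1.0579704" by (rule sq_step[OF _ b3]) simp_all
  have b5: "((((a ^ 2) ^ 2) ^ 2) ^ 2) ^ 2 \<le> 1.1193015" by (rule sq_step[OF _ b4]) simp_all
  have b6: "(((((a ^ 2) ^ 2) ^ 2) ^ 2) ^ 2) ^ 2 \<le> 1.252836" by (rule sq_step[OF _ b5]) simp_all
  have "((((((a ^ 2) ^ 2) ^ 2) ^ 2) ^ 2) ^ 2) ^ 2 \<le> 1.5695982" by (rule sq_step[OF _ b6]) simp_all
  then have a128: "a ^ 128 \<le> 1.5695982" by (simp flip: power_mult)
  have "exp (0.45::real) = exp t ^ 128" unfolding t_def by (simp flip: exp_of_nat_mult)
  also have "\<dots> \<le> a ^ 128" unfolding a_def by (intro power_mono exp_bound) (auto simp: t_def)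
  also have "\<dots> \<le> pi / 2" using a128 pi_approx by simp
  finally show ?thesis by (subst ln_ge_iff) auto
qed

lemma sin_lower: "x - x ^ 3 / 6 - x ^ 5 / 120 \<le> sin x" if "0 \<le> x" for x :: real
proof -
  have "\<bar>sin x - (\<Sum>m<5. sin_coeff m * x ^ m)\<bar> \<le> inverse (fact 5) * \<bar>x\<bar> ^ 5"
    by (rule Maclaurin_sin_bound)
  moreover have "(\<Sum>m<5. sin_coeff m * x ^ m) = x - x ^ 3 / 6"
  proof -
    have c: "sin_coeff 0 = 0" "sin_coeff 1 = 1" "sin_coeff (Suc 0) = 1" "sin_coeff 2 = 0" "sin_coeff 3 = -1/6" "sin_coeff 4 = 0"
      by (simp_all add: sin_coeff_def fact_numeral)
    have "{..<5::nat} = {0,1,2,3,4}" by auto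
    then show ?thesis by (simp add: c)
  qed
  ultimately have "\<bar>sin x - (x - x ^ 3 / 6)\<bar> \<le> x ^ 5 / 120" using that by (simp add: fact_numeral)
  from abs_le_D2[OF this] show ?thesis by linarith
qed

lemma cos_upper: "cos x \<le> 1 - x ^ 2 / 2 + x ^ 4 / 24 + x ^ 6 / 720" for x :: real
proof -
  obtain t where t: "cos x = (\<Sum>m<6. cos_coeff m * x ^ m) + (cos (t + 1/2 * real 6 * pi) / fact 6) * x ^ 6"
    using Maclaurin_cos_expansion by blast
  moreover have "(\<Sum>m<6. cos_coeff m * x ^ m) = 1 - x ^ 2 / 2 + x ^ 4 / 24"
  proof -
    have c: "cos_coeff 0 = 1" "cos_coeff 1 = 0" "cos_coeff (Suc 0) = 0" "cos_coeff 2 = -1/2" "cos_coeff 3 = 0" "cos_coeff 4 = 1/24" "cos_coeff 5 = 0"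
      by (simp_all add: cos_coeff_def fact_numeral)
    have "{..<6::nat} = {0,1,2,3,4,5}" by auto
    then show ?thesis by (simp add: c)
  qed
  moreover have "(cos (t + 1/2 * real 6 * pi) / fact 6) * x ^ 6 \<le> x ^ 6 / 720"
  proof -
    have "cos (t + 1/2 * real 6 * pi) \<le> 1" by simp
    moreover have "x ^ 6 \<ge> 0" by (rule zero_le_even_power) simp
    ultimately have "cos (t + 1/2 * real 6 * pi) * x ^ 6 \<le> 1 * x ^ 6" by (intro mult_right_mono)
    then show ?thesis by (simp add: fact_numeral)
  qed
  ultimately show ?thesis by linarith
qed

lemma poly_id1: "(1 - x^2/3) * (1 - x^2/6 - x^4/120) - (1 - x^2/2 + x^4/24 + x^6/720) = x^4/180 + x^6/720"
  for x :: real
  by (simp add: field_simps power_def)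

lemma xcot_bound:
  fixes x :: real
  assumes x: "0 < x" "x \<le> 1/2"
  shows "2 * x * cot x \<le> 2 - 2 * x^2 / 3"
proof -
  define D where "D = 1 - x^2/6 - x^4/120"
  define N where "N = 1 - x^2/2 + x^4/24 + x^6/720"
  have sx: "sin x > 0" using x pi_approx by (intro sin_gt_zero) auto
  have sD: "x * D \<le> sin x" using sin_lower[of x] x unfolding D_def by (simp add: field_simps power_def)
  have cN: "cos x \<le> N" unfolding N_def by (rule cos_upper)
  have x2: "x^2 \<le> 1/4"
  proof -
    have "x^2 \<le> (1/2)^2" using x by (intro power_mono) auto
    then show ?thesis by (simp add: power2_eq_square)
  qed
  have x4: "x^4 \<le> 1/16"
  proof -
    have h: "(x^2)^2 \<le> (1/4)^2" using x2 by (intro power_mono) auto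
    have e: "x^4 = (x^2)^2" by (simp flip: power_mult)
    have "(1/4::real)^2 = 1/16" by (simp add: power2_eq_square)
    moreover have "x^4 \<le> (1/4)^2" by (subst e) (rule h)
    ultimately show ?thesis by simp
  qed
  have D0: "D \<ge> 0" unfolding D_def using x2 x4 by simp
  have t0: "1 - x^2/3 \<ge> 0" using x2 by simp
  have "x * cos x \<le> x * N" using cN x by (intro mult_left_mono) auto
  also have "\<dots> \<le> x * ((1 - x^2/3) * D)"
  proof (intro mult_left_mono)
    have "x^4/180 + x^6/720 \<ge> 0" by (simp add: zero_le_even_power)
    then show "N \<le> (1 - x^2/3) * D" using poly_id1[of x] unfolding N_def D_def by linarith
  qed (use x in auto)
  also have "\<dots> = (1 - x^2/3) * (x * D)" by simp
  also have "\<dots> \<le> (1 - x^2/3) * sin x" using sD t0 by (intro mult_left_mono)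
  finally have "x * cos x / sin x \<le> 1 - x^2/3" using sx by (simp add: pos_divide_le_eq)
  moreover have "2 * x * cot x = 2 * (x * cos x / sin x)" by (simp add: cot_def)
  ultimately show ?thesis by linarith
qed

lemma sinc2_lower:
  fixes x :: real
  assumes x: "0 < x"
  shows "1 - 2 * x^2 / 3 - 2 * x^4 / 15 \<le> sin (2 * x) / (2 * x)"
proof -
  have "2 * x - (2 * x) ^ 3 / 6 - (2 * x) ^ 5 / 120 \<le> sin (2 * x)" using sin_lower[of "2*x"] x by simp
  moreover have "2 * x - (2 * x) ^ 3 / 6 - (2 * x) ^ 5 / 120 = (2 * x) * (1 - 2 * x^2 / 3 - 2 * x^4 / 15)"
    by (simp add: field_simps power_def)
  ultimately show ?thesis using x by (simp add: pos_le_divide_eq mult.commute)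
qed

lemma key_num:
  fixes x :: real
  assumes x: "0 < x" "x \<le> pi / 8"
  shows "2 * x * cot x - ln (sin (2 * x) / (2 * x)) \<le> pi / 2 + ln (pi / 2)"
proof -
  have xb: "x \<le> 0.3927" using x pi_approx by simp
  have x2: "x^2 \<le> 0.15422"
  proof -
    have "x^2 \<le> 0.3927^2" using x xb by (intro power_mono) auto
    then show ?thesis by (simp add: power2_eq_square)
  qed
  have x4: "x^4 \<le> 0.023785"
  proof -
    have h: "(x^2)^2 \<le> 0.15422^2" using x2 by (intro power_mono) auto
    have e: "x^4 = (x^2)^2" by (simp flip: power_mult)
    have "(0.15422::real)^2 \<le> 0.023785" by (simp add: power2_eq_square)
    moreover have "x^4 \<le> 0.15422^2" by (subst e) (rule h)
    ultimately show ?thesis by linarith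
  qed
  define T where "T = 2 * x^2 / 3 + 2 * x^4 / 15"
  have T0: "0 \<le> T" unfolding T_def by (simp add: zero_le_even_power)
  have T1: "T \<le> 0.106" unfolding T_def using x2 x4 by simp
  define S where "S = sin (2 * x) / (2 * x)"
  have S1: "1 - T \<le> S" unfolding S_def T_def using sinc2_lower[OF x(1)] by simp
  have S0: "S > 0" using S1 T1 by simp
  have "- ln S = ln (1 / S)" using S0 by (simp add: ln_div)
  also have "\<dots> \<le> 1 / S - 1" using S0 by (intro ln_le_minus_one) simp
  also have "\<dots> \<le> 1 / (1 - T) - 1" using S1 T1 by (simp add: frac_le)
  also have "\<dots> \<le> T + 0.013"
  proof -
    have tt0: "T * T \<le> 0.106 * 0.106" using T0 T1 by (intro mult_mono) auto
    have tt: "T * T \<le> 0.011236" using tt0 by simp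
    have "(T + 1.013) * (1 - T) = 1.013 - 0.013 * T - T * T" by (simp add: field_simps)
    then have "1 \<le> (T + 1.013) * (1 - T)" using tt T0 T1 by simp
    then show ?thesis using T1 by (simp add: field_simps)
  qed
  finally have lnS: "- ln S \<le> T + 0.013" .
  have xc: "2 * x * cot x \<le> 2 - 2 * x^2 / 3" using xcot_bound[OF x(1)] xb by simp
  have "2 * x * cot x - ln S \<le> 2 - 2 * x^2 / 3 + T + 0.013" using xc lnS by linarith
  also have "\<dots> = 2 + 2 * x^4 / 15 + 0.013" unfolding T_def by simp
  also have "\<dots> \<le> pi / 2 + ln (pi / 2)" using x4 ln_pi_half pi_approx by simp
  finally show ?thesis unfolding S_def .
qed

lemma cot_conv:
  fixes c d :: real
  assumes d: "0 < d" "d < c" and c: "c \<le> pi / 2"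
  shows "2 * d * cot c \<le> ln (sin (c + d)) - ln (sin (c - d))"
proof -
  define \<phi> where "\<phi> e = ln (sin (c + e)) - ln (sin (c - e)) - 2 * e * cot c" for e
  have sp: "sin (c + e) > 0" "sin (c - e) > 0" if "0 \<le> e" "e \<le> d" for e
    using that d c by (auto intro!: sin_gt_zero)
  have sc: "sin c > 0" using d c by (intro sin_gt_zero) auto
  have s2c: "sin (2 * c) \<ge> 0" using d c by (intro sin_ge_zero) auto
  have "\<phi> 0 \<le> \<phi> d"
  proof (rule DERIV_nonneg_imp_nondecreasing[OF less_imp_le[OF d(1)]])
    fix e assume e: "0 \<le> e" "e \<le> d"
    note s = sp[OF e]
    have der: "(\<phi> has_real_derivative (cot (c + e) + cot (c - e) - 2 * cot c)) (at e)"
      unfolding \<phi>_def using s sc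
      by (auto intro!: derivative_eq_intros simp: cot_def field_simps)
    have prod: "sin (c + e) * sin (c - e) = sin c ^ 2 - sin e ^ 2"
    proof -
      have "sin (c + e) * sin (c - e) = sin c ^ 2 * cos e ^ 2 - cos c ^ 2 * sin e ^ 2"
        by (simp add: sin_add sin_diff algebra_simps power2_eq_square)
      also have "\<dots> = sin c ^ 2 - sin e ^ 2" unfolding cos_squared_eq by (simp add: algebra_simps)
      finally show ?thesis .
    qed
    have sum: "cot (c + e) + cot (c - e) = sin (2 * c) / (sin (c + e) * sin (c - e))"
    proof -
      have "sin ((c + e) + (c - e)) = sin (c + e) * cos (c - e) + cos (c + e) * sin (c - e)" by (rule sin_add)
      moreover have "(c + e) + (c - e) = 2 * c" by simp
      ultimately show ?thesis unfolding cot_def using s by (simp add: field_simps)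
    qed
    have twocot: "2 * cot c = sin (2 * c) / sin c ^ 2"
      unfolding cot_def sin_double using sc by (simp add: field_simps power2_eq_square)
    have "sin (2 * c) / sin c ^ 2 \<le> sin (2 * c) / (sin (c + e) * sin (c - e))"
    proof (rule divide_left_mono[OF _ s2c])
      show "sin (c + e) * sin (c - e) \<le> sin c ^ 2" using prod by simp
      show "0 < sin c ^ 2 * (sin (c + e) * sin (c - e))" using s sc by simp
    qed
    then have "cot (c + e) + cot (c - e) - 2 * cot c \<ge> 0" using sum twocot by simp
    then show "\<exists>y. (\<phi> has_real_derivative y) (at e) \<and> 0 \<le> y" using der by blast
  qed
  moreover have "\<phi> 0 = 0" unfolding \<phi>_def by simp
  ultimately show ?thesis unfolding \<phi>_def by simp
qed

lemma cot_sum_tele: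
  assumes q: "q \<ge> 2"
  shows "(\<Sum>k<q. cot ((2*real k+1)*pi/(4*real q)))
           \<le> cot (pi/(4*real q)) - ln (sin (pi/(2*real q))) / (pi/(2*real q))"
proof -
  define h where "h = pi/(2*real q)"
  have h0: "h > 0" unfolding h_def using q by simp
  define g where "g i = ln (sin ((real i + 1) * h))" for i :: nat
  define f where "f k = cot ((2*real k+1)*pi/(4*real q))" for k :: nat
  have step: "h * f (Suc i) \<le> g (Suc i) - g i" if i: "i < q - 1" for i
  proof -
    define c where "c = (real i + 3/2) * h"
    have fc: "f (Suc i) = cot c" unfolding f_def c_def h_def using q by (simp add: field_simps)
    have ih: "real i * h \<ge> 0" using h0 by simp
    have e: "(real i + 3/2)*h = real i * h + 3/2*h" by (simp add: distrib_right)
    have d1: "0 < h/2" "h/2 < c" unfolding c_def using h0 ih e by linarith+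
    have "real i + 3/2 \<le> real q - 1/2" using i by linarith
    then have "(real i + 3/2) * h \<le> (real q - 1/2) * h" using h0 by (intro mult_right_mono) auto
    also have "\<dots> \<le> pi / 2" unfolding h_def using q by (simp add: field_simps)
    finally have c2: "c \<le> pi/2" unfolding c_def .
    have "2 * (h/2) * cot c \<le> ln (sin (c + h/2)) - ln (sin (c - h/2))" by (rule cot_conv[OF d1 c2])
    moreover have "c + h/2 = (real (Suc i) + 1) * h" "c - h/2 = (real i + 1) * h" unfolding c_def by (simp_all add: field_simps)
    ultimately show ?thesis unfolding fc g_def by simp
  qed
  have "(\<Sum>i<q-1. h * f (Suc i)) \<le> (\<Sum>i<q-1. g (Suc i) - g i)" by (intro sum_mono step) auto
  also have "\<dots> = g (q - 1) - g 0" by (rule sum_lessThan_telescope)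
  also have "g (q - 1) = 0"
  proof -
    have e: "(real (q - 1) + 1) * h = pi / 2" unfolding h_def using q by (simp add: of_nat_diff field_simps)
    show ?thesis unfolding g_def e by simp
  qed
  also have "g 0 = ln (sin h)" unfolding g_def by simp
  finally have "h * (\<Sum>i<q-1. f (Suc i)) \<le> - ln (sin h)" by (simp add: sum_distrib_left)
  then have A: "(\<Sum>i<q-1. f (Suc i)) \<le> - ln (sin h) / h" using h0 by (subst pos_le_divide_eq) (auto simp: mult.commute)
  have "(\<Sum>k<q. f k) = (\<Sum>k<Suc (q-1). f k)" using q by simp
  also have "\<dots> = f 0 + (\<Sum>i<q-1. f (Suc i))" by (rule sum.lessThan_Suc_shift)
  finally have "(\<Sum>k<q. f k) \<le> f 0 - ln (sin h) / h" using A by simp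
  moreover have "f 0 = cot (pi/(4*real q))" unfolding f_def by simp
  ultimately show ?thesis unfolding f_def h_def by simp
qed

lemma cheb_cot_sum:
  assumes q: "q \<ge> 2"
  shows "(\<Sum>k<q. cot ((2*real k+1)*pi/(4*real q))) / real q \<le> 1 + 2 / pi * ln (real q)"
proof -
  define x where "x = pi / (4 * real q)"
  have x0: "0 < x" unfolding x_def using q by simp
  have x8: "x \<le> pi / 8" unfolding x_def using q by (simp add: field_simps)
  have h: "pi/(2*real q) = 2 * x" unfolding x_def by simp
  have qx: "real q = pi / (4 * x)" unfolding x_def using q by simp
  have s2: "sin (2 * x) > 0" using x0 x8 by (intro sin_gt_zero) auto
  define A where "A = 2 * x * cot x"
  define B where "B = ln (sin (2 * x))"
  define L where "L = ln (2 * x)"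
  define P where "P = ln (pi / 2)"
  have key: "A - (B - L) \<le> pi / 2 + P"
    using key_num[OF x0 x8] s2 x0 unfolding A_def B_def L_def P_def by (simp add: ln_div)
  have lnq: "ln (real q) = P - L"
  proof -
    have "real q = (pi / 2) / (2 * x)" using qx by simp
    then have "ln (real q) = ln ((pi / 2) / (2 * x))" by (rule arg_cong)
    also have "\<dots> = ln (pi / 2) - ln (2 * x)" by (rule ln_divide_pos) (use x0 in auto)
    finally show ?thesis unfolding P_def L_def .
  qed
  have "(\<Sum>k<q. cot ((2*real k+1)*pi/(4*real q))) / real q \<le> (cot x - B / (2 * x)) / real q"
    using cot_sum_tele[OF q] q unfolding h B_def x_def[symmetric] by (simp add: divide_right_mono)
  also have "\<dots> = 2 / pi * (A - B)" unfolding qx A_def using x0 by (simp add: field_simps)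
  also have "\<dots> \<le> 2 / pi * (pi / 2 + P - L)" using key by (intro mult_left_mono) auto
  also have "\<dots> = 1 + 2 / pi * ln (real q)" unfolding lnq by (simp add: field_simps)
  finally show ?thesis .
qed

lemma periodic_sum_step:
  fixes F :: "int \<Rightarrow> real"
  assumes per: "\<And>k. F (k + int n) = F k"
  shows "(\<Sum>i<n. F (a + 1 + int i)) = (\<Sum>i<n. F (a + int i))"
proof -
  define g where "g i = F (a + int i)" for i
  have "(\<Sum>i<Suc n. g i) = g 0 + (\<Sum>i<n. g (Suc i))" by (rule sum.lessThan_Suc_shift)
  moreover have "(\<Sum>i<Suc n. g i) = (\<Sum>i<n. g i) + g n" by simp
  moreover have "g n = g 0" unfolding g_def using per[of a] by simp
  ultimately have "(\<Sum>i<n. g (Suc i)) = (\<Sum>i<n. g i)" by simp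
  then show ?thesis unfolding g_def by (simp add: add.assoc)
qed

lemma periodic_sum:
  fixes F :: "int \<Rightarrow> real"
  assumes per: "\<And>k. F (k + int n) = F k"
  shows "(\<Sum>i<n. F (a + int i)) = (\<Sum>i<n. F (b + int i))"
proof -
  have shift: "(\<Sum>i<n. F (c + int k + int i)) = (\<Sum>i<n. F (c + int i))" for c k
  proof (induction k)
    case 0 then show ?case by simp
  next
    case (Suc k)
    have "(\<Sum>i<n. F (c + int (Suc k) + int i)) = (\<Sum>i<n. F ((c + int k) + 1 + int i))" by (simp add: add_ac)
    also have "\<dots> = (\<Sum>i<n. F ((c + int k) + int i))" by (rule periodic_sum_step) (rule per)
    finally show ?case using Suc by simp
  qed
  define c where "c = min a b"
  have "a = c + int (nat (a - c))" "b = c + int (nat (b - c))" unfolding c_def by auto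
  then show ?thesis using shift[of c "nat (a - c)"] shift[of c "nat (b - c)"] by metis
qed

lemma abs_cot_neg: "\<bar>cot (- y)\<bar> = \<bar>cot y\<bar>" for y :: real
proof -
  have "cot (- y) = - cot y" by (simp add: cot_def)
  then show ?thesis by simp
qed

lemma cot_nonneg: "0 < y \<Longrightarrow> y \<le> pi/2 \<Longrightarrow> cot y \<ge> 0"
  unfolding cot_def by (intro divide_nonneg_nonneg cos_ge_zero sin_ge_zero) auto

lemma shift_pair:
  assumes q: "q \<ge> 2" and x: "0 \<le> x" "x \<le> pi" and nn: "\<And>j. j < q \<Longrightarrow> x \<noteq> thn q j"
  shows "\<bar>cos (real q * x)\<bar> * (\<Sum>i<2*q. \<bar>cot ((thn q i - x) / 2)\<bar>)
           \<le> 2 * (\<Sum>k<q. cot ((2*real k+1)*pi/(4*real q)))"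
proof -
  define h where "h = pi / (2 * real q)"
  have h0: "h > 0" unfolding h_def using q by simp
  have h4: "h \<le> pi/4" unfolding h_def using q by (simp add: field_simps)
  have qh: "real q * h = pi/2" unfolding h_def using q by simp
  define z where "z = real q * x / pi - 1/2"
  define m where "m = \<lfloor>z\<rfloor>"
  define u where "u = z - of_int m"
  have u01: "0 \<le> u" "u < 1" unfolding u_def m_def by linarith+
  have zlo: "z \<ge> -1/2" unfolding z_def using x q by simp
  have zhi: "z \<le> real q - 1/2"
  proof -
    have "real q * x / pi \<le> real q * pi / pi" using x q by (intro divide_right_mono mult_left_mono) auto
    then show ?thesis unfolding z_def by simp
  qed
  have xz: "x = h * (2 * z + 1)" unfolding h_def z_def using q by (simp add: field_simps)
  have u0: "u \<noteq> 0"
  proof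
    assume "u = 0"
    then have zm: "z = of_int m" unfolding u_def by simp
    have m0: "m \<ge> 0" using zlo zm by linarith
    have mq: "m < int q" using zhi zm by linarith
    have "x = thn q (nat m)" unfolding thn_def using xz zm m0 h_def by (simp add: field_simps)
    moreover have "nat m < q" using mq m0 by linarith
    ultimately show False using nn by blast
  qed
  then have u: "0 < u" "u < 1" using u01 by auto
  have cosq: "\<bar>cos (real q * x)\<bar> = sin (pi * u)"
  proof -
    have "real q * x = (real q * h) * (2 * z + 1)" unfolding xz by (simp add: algebra_simps)
    also have "\<dots> = pi / 2 * (2 * z + 1)" by (simp only: qh)
    finally have "real q * x = pi * z + pi / 2" by (simp add: algebra_simps)
    moreover have "z = u + of_int m" unfolding u_def by simp
    ultimately have "real q * x = pi * u + pi * of_int m + pi / 2" by (simp add: algebra_simps)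
    then have "cos (real q * x) = - sin (pi * u + pi * of_int m)" by (simp add: cos_add)
    also have "sin (pi * u + pi * of_int m) = sin (pi * u) * cos (pi * of_int m)" by (simp add: sin_add)
    finally have "\<bar>cos (real q * x)\<bar> = \<bar>sin (pi * u)\<bar>" by simp
    moreover have "sin (pi * u) > 0" using u by (intro sin_gt_zero) auto
    ultimately show ?thesis by simp
  qed
  define F where "F k = \<bar>cot (h * (of_int k - u))\<bar>" for k :: int
  have per: "F (k + int (2*q)) = F k" for k
  proof -
    have "h * (of_int (k + int (2*q)) - u) = h * (of_int k - u) + pi" using qh by (simp add: algebra_simps)
    then show ?thesis unfolding F_def by (simp add: cot_def)
  qed
  have terms: "\<bar>cot ((thn q i - x) / 2)\<bar> = F (- m + int i)" for i
  proof -
    have "(thn q i - x) / 2 = h * (of_int (- m + int i) - u)"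
      unfolding thn_def xz u_def h_def using q by (simp add: field_simps)
    then show ?thesis unfolding F_def by simp
  qed
  have "(\<Sum>i<2*q. \<bar>cot ((thn q i - x) / 2)\<bar>) = (\<Sum>i<2*q. F (- m + int i))" using terms by simp
  also have "\<dots> = (\<Sum>i<2*q. F ((1 - int q) + int i))" by (rule periodic_sum[where F=F and n="2*q"], rule per)
  also have "\<dots> = (\<Sum>j<q. F (- int j)) + (\<Sum>j<q. F (int j + 1))"
  proof -
    have "(\<Sum>i\<in>{0..<q}. F ((1 - int q) + int i)) + (\<Sum>i\<in>{q..<2*q}. F ((1 - int q) + int i)) = (\<Sum>i\<in>{0..<2*q}. F ((1 - int q) + int i))"
      by (rule sum.atLeastLessThan_concat) auto
    then have "(\<Sum>i<2*q. F ((1 - int q) + int i)) = (\<Sum>i\<in>{0..<q}. F ((1 - int q) + int i)) + (\<Sum>i\<in>{q..<2*q}. F ((1 - int q) + int i))"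
      by (simp only: atLeast0LessThan)
    moreover have "(\<Sum>i\<in>{0..<q}. F ((1 - int q) + int i)) = (\<Sum>j<q. F (- int j))"
      by (rule sum.reindex_bij_witness[of _ "\<lambda>j. q - 1 - j" "\<lambda>i. q - 1 - i"]) (auto simp: of_nat_diff algebra_simps)
    moreover have "(\<Sum>i\<in>{q..<2*q}. F ((1 - int q) + int i)) = (\<Sum>j<q. F (int j + 1))"
      by (rule sum.reindex_bij_witness[of _ "\<lambda>j. j + q" "\<lambda>i. i - q"]) (auto simp: of_nat_diff algebra_simps)
    ultimately show ?thesis by simp
  qed
  also have "\<dots> = (\<Sum>j<q. cot (h * (real j + u)) + cot (h * (real j + 1 - u)))"
  proof -
    have "F (- int j) + F (int j + 1) = cot (h * (real j + u)) + cot (h * (real j + 1 - u))" if j: "j < q" for j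
    proof -
      have "(real j + 1) * h \<le> real q * h" using j h0 by (intro mult_right_mono) auto
      then have hj: "h * real j + h \<le> pi / 2" using qh by (simp add: algebra_simps)
      have hu: "0 < h * u" "h * u < h" using h0 u by (simp_all add: mult_strict_left_mono[of u 1 h, simplified])
      have hj0: "h * real j \<ge> 0" using h0 by simp
      have e1: "h * (real j + u) = h * real j + h * u" by (simp add: distrib_left)
      have e2: "h * (real j + 1 - u) = h * real j + h - h * u" by (simp add: algebra_simps)
      have a1: "0 < h * (real j + u)" "h * (real j + u) \<le> pi/2"
        unfolding e1 using hj hu hj0 by linarith+
      have a2: "0 < h * (real j + 1 - u)" "h * (real j + 1 - u) \<le> pi/2"
        unfolding e2 using hj hu hj0 by linarith+
      have "h * (of_int (- int j) - u) = - (h * (real j + u))" by (simp add: algebra_simps)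
      then have "F (- int j) = \<bar>cot (- (h * (real j + u)))\<bar>" unfolding F_def by (simp only:)
      also have "\<dots> = cot (h * (real j + u))" using cot_nonneg[OF a1] by (simp only: abs_cot_neg abs_of_nonneg)
      finally have f1: "F (- int j) = cot (h * (real j + u))" .
      have "F (int j + 1) = \<bar>cot (h * (real j + 1 - u))\<bar>" unfolding F_def by simp
      also have "\<dots> = cot (h * (real j + 1 - u))" using cot_nonneg[OF a2] by simp
      finally show ?thesis using f1 by simp
    qed
    then show ?thesis by (simp add: sum.distrib[symmetric])
  qed
  finally have S: "(\<Sum>i<2*q. \<bar>cot ((thn q i - x) / 2)\<bar>) = (\<Sum>j<q. cot (h * (real j + u)) + cot (h * (real j + 1 - u)))" .
  have "\<bar>cos (real q * x)\<bar> * (\<Sum>i<2*q. \<bar>cot ((thn q i - x) / 2)\<bar>)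
        = (\<Sum>j<q. sin (pi * u) * (cot (h * (real j + u)) + cot (h * (real j + 1 - u))))"
    unfolding S cosq by (simp add: sum_distrib_left)
  also have "\<dots> \<le> (\<Sum>j<q. 2 * cot (h * (real j + 1/2)))"
  proof (intro sum_mono)
    fix j assume "j \<in> {..<q}"
    then have "(real j + 1) * h \<le> pi/2" using qh h0 by (simp add: mult_right_mono flip: qh)
    then show "sin (pi * u) * (cot (h * (real j + u)) + cot (h * (real j + 1 - u))) \<le> 2 * cot (h * (real j + 1/2))"
      using pair_ineq[OF h0 h4 u] by simp
  qed
  also have "\<dots> = 2 * (\<Sum>k<q. cot ((2*real k+1)*pi/(4*real q)))"
    unfolding sum_distrib_left h_def by (intro sum.cong) (auto simp: field_simps)
  finally show ?thesis .
qed

lemma lebesgue_bound: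
  assumes q: "q \<ge> 2" and t: "-1 \<le> t" "t \<le> 1"
  shows "(\<Sum>j<q. \<bar>\<Prod>i\<in>{0..<q}-{j}. (t - cos (thn q i)) / (cos (thn q j) - cos (thn q i))\<bar>)
          \<le> 1 + 2 / pi * ln (real q)"
proof (cases "\<exists>k<q. t = cos (thn q k)")
  case True
  then obtain k where k: "k < q" "t = cos (thn q k)" by auto
  have "\<bar>\<Prod>i\<in>{0..<q}-{j}. (t - cos (thn q i)) / (cos (thn q j) - cos (thn q i))\<bar> = (if j = k then 1 else 0)"
    if j: "j < q" for j
  proof (cases "j = k")
    case True
    have "\<forall>i\<in>{0..<q}-{j}. (t - cos (thn q i)) / (cos (thn q j) - cos (thn q i)) = 1"
    proof
      fix i assume i: "i \<in> {0..<q}-{j}"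
      have "cos (thn q j) \<noteq> cos (thn q i)" using thn_inj[of j q i] j i by auto
      then show "(t - cos (thn q i)) / (cos (thn q j) - cos (thn q i)) = 1" using True k by simp
    qed
    then have "(\<Prod>i\<in>{0..<q}-{j}. (t - cos (thn q i)) / (cos (thn q j) - cos (thn q i))) = 1"
      by (rule prod.neutral)
    then show ?thesis using True by simp
  next
    case False
    then have "k \<in> {0..<q}-{j}" using k by auto
    then have "(\<Prod>i\<in>{0..<q}-{j}. (t - cos (thn q i)) / (cos (thn q j) - cos (thn q i))) = 0"
      using k by (intro prod_zero) auto
    then show ?thesis using False by simp
  qed
  then have "(\<Sum>j<q. \<bar>\<Prod>i\<in>{0..<q}-{j}. (t - cos (thn q i)) / (cos (thn q j) - cos (thn q i))\<bar>)
      = (\<Sum>j<q. if j = k then 1 else 0)" by (intro sum.cong) auto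
  also have "\<dots> = 1" using k by simp
  also have "\<dots> \<le> 1 + 2 / pi * ln (real q)" using q by simp
  finally show ?thesis .
next
  case False
  define x where "x = arccos t"
  have x: "0 \<le> x" "x \<le> pi" "cos x = t" unfolding x_def using t by (auto intro: arccos_lbound arccos_ubound)
  have nn: "\<And>i. i < q \<Longrightarrow> cos x \<noteq> cos (thn q i)" using False x by auto
  have nn': "\<And>j. j < q \<Longrightarrow> x \<noteq> thn q j" using nn by auto
  have q1: "q \<ge> 1" using q by simp
  have "(\<Sum>j<q. \<bar>\<Prod>i\<in>{0..<q}-{j}. (t - cos (thn q i)) / (cos (thn q j) - cos (thn q i))\<bar>)
      \<le> \<bar>cos (real q * x)\<bar> / (2 * real q) * (\<Sum>i<2*q. \<bar>cot ((thn q i - x) / 2)\<bar>)"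
    using lebesgue_cot[OF q1 x(1,2) nn] x(3) by simp
  also have "\<dots> = (\<bar>cos (real q * x)\<bar> * (\<Sum>i<2*q. \<bar>cot ((thn q i - x) / 2)\<bar>)) / (2 * real q)" by simp
  also have "\<dots> \<le> (2 * (\<Sum>k<q. cot ((2*real k+1)*pi/(4*real q)))) / (2 * real q)"
    using shift_pair[OF q x(1,2) nn'] q by (intro divide_right_mono) auto
  also have "\<dots> = (\<Sum>k<q. cot ((2*real k+1)*pi/(4*real q))) / real q" by simp
  also have "\<dots> \<le> 1 + 2 / pi * ln (real q)" by (rule cheb_cot_sum[OF q])
  finally show ?thesis .
qed

lemma cheb_node_thn: "cheb_node q a b j = (a + b) / 2 + (b - a) / 2 * cos (thn q j)"
  unfolding cheb_node_def thn_def by simp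

lemma lagrange_cheb_eq:
  assumes ab: "a < b"
  shows "lagrange_cheb q a b j y = (\<Prod>i\<in>{0..<q}-{j}. ((y - (a+b)/2) / ((b-a)/2) - cos (thn q i)) / (cos (thn q j) - cos (thn q i)))"
  unfolding lagrange_cheb_def cheb_node_thn
proof (intro prod.cong refl)
  fix i
  have r: "(b - a) / 2 \<noteq> 0" using ab by simp
  have n: "y - ((a + b) / 2 + (b - a) / 2 * cos (thn q i)) = (b - a) / 2 * ((y - (a+b)/2) / ((b - a) / 2) - cos (thn q i))"
    using r by (simp add: field_simps)
  have d: "(a + b) / 2 + (b - a) / 2 * cos (thn q j) - ((a + b) / 2 + (b - a) / 2 * cos (thn q i))
     = (b - a) / 2 * (cos (thn q j) - cos (thn q i))" by (simp add: algebra_simps)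
  show "(y - ((a + b) / 2 + (b - a) / 2 * cos (thn q i))) /
         ((a + b) / 2 + (b - a) / 2 * cos (thn q j) - ((a + b) / 2 + (b - a) / 2 * cos (thn q i))) =
         ((y - (a+b)/2) / ((b-a)/2) - cos (thn q i)) / (cos (thn q j) - cos (thn q i))"
    unfolding n d using r by (rule mult_divide_mult_cancel_left)
qed

lemma lebesgue_interval:
  assumes q: "q \<ge> 2" and ab: "a < b" and y: "y \<in> {a..b}"
  shows "(\<Sum>j<q. \<bar>lagrange_cheb q a b j y\<bar>) \<le> 1 + 2 / pi * ln (real q)"
proof -
  define t where "t = (y - (a+b)/2) / ((b-a)/2)"
  have t: "-1 \<le> t" "t \<le> 1" unfolding t_def using ab y by (auto simp: field_simps)
  show ?thesis using lebesgue_bound[OF q t] unfolding lagrange_cheb_eq[OF ab] t_def .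
qed

lemma err_1d:
  fixes D :: "nat \<Rightarrow> real \<Rightarrow> real"
  assumes q: "q \<ge> 2" and a: "0 < a" "a < b" "b - a \<le> a"
    and der: "\<And>n x. x \<in> {a..b} \<Longrightarrow> (D n has_real_derivative D (Suc n) x) (at x within {a..b})"
    and bnd: "\<And>\<eta>. \<eta> \<in> {a..b} \<Longrightarrow> \<bar>\<eta> ^ q * D q \<eta>\<bar> \<le> K"
    and y: "y \<in> {a..b}"
  shows "\<bar>D 0 y - (\<Sum>j<q. D 0 (cheb_node q a b j) * lagrange_cheb q a b j y)\<bar> \<le> K / fact q / 2 ^ (2 * q - 1)"
proof -
  define r where "r = (b - a) / 2"
  have r: "r > 0" "r \<le> a / 2" unfolding r_def using a by auto
  have q1: "q \<ge> 1" using q by simp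
  have inj: "inj_on (cheb_node q a b) {..<q}"
  proof (rule inj_onI)
    fix i j assume ij: "i \<in> {..<q}" "j \<in> {..<q}" "cheb_node q a b i = cheb_node q a b j"
    then have "cos (thn q i) = cos (thn q j)" unfolding cheb_node_thn using a by simp
    then show "i = j" using thn_inj ij by auto
  qed
  have inab: "cheb_node q a b j \<in> {a..b}" if "j < q" for j
  proof -
    have c1: "-1 \<le> cos (thn q j)" "cos (thn q j) \<le> 1" by auto
    have w: "(b - a) / 2 \<ge> 0" using a by simp
    have m1: "(b - a) / 2 * cos (thn q j) \<le> (b - a) / 2 * 1" using mult_left_mono[OF c1(2) w] .
    have m2: "(b - a) / 2 * (-1) \<le> (b - a) / 2 * cos (thn q j)" using mult_left_mono[OF c1(1) w] .
    have gen: "\<And>w. w \<le> (b - a) / 2 \<Longrightarrow> - ((b - a) / 2) \<le> w \<Longrightarrow> (a + b) / 2 + w \<in> {a..b}" by (auto simp: field_simps)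
    show ?thesis unfolding cheb_node_thn by (rule gen) (use m1 m2 in simp_all)
  qed
  obtain \<eta> where \<eta>: "\<eta> \<in> {a..b}" and eq: "D 0 y - (\<Sum>j<q. D 0 (cheb_node q a b j) * (\<Prod>i\<in>{0..<q}-{j}. (y - cheb_node q a b i)/(cheb_node q a b j - cheb_node q a b i)))
            = D q \<eta> / fact q * (\<Prod>j<q. (y - cheb_node q a b j))"
    using interp_error[where D=D and ys="cheb_node q a b" and a=a and b=b and q=q and y=y, OF a(2) q1 inj inab der y] by blast
  have eqL: "(\<Sum>j<q. D 0 (cheb_node q a b j) * lagrange_cheb q a b j y)
     = (\<Sum>j<q. D 0 (cheb_node q a b j) * (\<Prod>i\<in>{0..<q}-{j}. (y - cheb_node q a b i)/(cheb_node q a b j - cheb_node q a b i)))"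
    unfolding lagrange_cheb_def ..
  define t where "t = (y - (a+b)/2) / r"
  have t: "-1 \<le> t" "t \<le> 1" unfolding t_def r_def using a y by (auto simp: field_simps)
  have "(\<Prod>j<q. (y - cheb_node q a b j)) = (\<Prod>j<q. r * (t - cos (thn q j)))"
    unfolding cheb_node_thn t_def r_def using a by (intro prod.cong) (auto simp: field_simps)
  also have "\<dots> = r ^ q * (\<Prod>j<q. (t - cos (thn q j)))" by (simp add: prod.distrib)
  finally have pe: "\<bar>\<Prod>j<q. (y - cheb_node q a b j)\<bar> = r ^ q * \<bar>\<Prod>j<q. (t - cos (thn q j))\<bar>"
    using r by (simp add: abs_mult)
  have "r ^ q * \<bar>\<Prod>j<q. (t - cos (thn q j))\<bar> \<le> r ^ q * (1 / 2 ^ (q - 1))"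
    using prod_nodes_bound[OF q1 t] r by (intro mult_left_mono) auto
  then have "\<bar>\<Prod>j<q. (y - cheb_node q a b j)\<bar> \<le> r ^ q * (1 / 2 ^ (q - 1))" using pe by simp
  moreover have "\<bar>D q \<eta>\<bar> \<le> K / a ^ q"
  proof -
    have "\<eta> ^ q * \<bar>D q \<eta>\<bar> \<le> K" using bnd[OF \<eta>] \<eta> a by (simp add: abs_mult)
    moreover have "a ^ q \<le> \<eta> ^ q" using \<eta> a by (intro power_mono) auto
    moreover have "0 \<le> \<bar>D q \<eta>\<bar>" by simp
    ultimately have "a ^ q * \<bar>D q \<eta>\<bar> \<le> K" using mult_right_mono[of "a ^ q" "\<eta> ^ q" "\<bar>D q \<eta>\<bar>"] by linarith
    then show ?thesis using a by (simp add: field_simps)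
  qed
  ultimately have mm: "\<bar>D q \<eta>\<bar> * \<bar>\<Prod>j<q. (y - cheb_node q a b j)\<bar> \<le> (K / a ^ q) * (r ^ q * (1 / 2 ^ (q - 1)))"
    by (intro mult_mono) (auto intro: order.trans[OF abs_ge_zero])
  have "\<bar>D q \<eta> / fact q * (\<Prod>j<q. (y - cheb_node q a b j))\<bar> = (\<bar>D q \<eta>\<bar> * \<bar>\<Prod>j<q. (y - cheb_node q a b j)\<bar>) / fact q"
    by (simp add: abs_mult)
  also have "\<dots> \<le> ((K / a ^ q) * (r ^ q * (1 / 2 ^ (q - 1)))) / fact q"
    using mm by (intro divide_right_mono) auto
  finally have "\<bar>D q \<eta> / fact q * (\<Prod>j<q. (y - cheb_node q a b j))\<bar> \<le> (K / a ^ q) / fact q * (r ^ q * (1 / 2 ^ (q - 1)))"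
    by (simp add: mult_ac)
  also have "\<dots> = K / fact q * ((r / a) ^ q / 2 ^ (q - 1))" by (simp add: power_divide field_simps)
  also have "\<dots> \<le> K / fact q * ((1/2) ^ q / 2 ^ (q - 1))"
  proof -
    have "\<bar>a ^ q * D q a\<bar> \<le> K" using bnd a by auto
    then have "K \<ge> 0" by (rule order.trans[OF abs_ge_zero])
    moreover have "(r / a) ^ q \<le> (1/2) ^ q" using r a by (intro power_mono) (auto simp: field_simps)
    ultimately show ?thesis by (intro mult_left_mono divide_right_mono) auto
  qed
  also have "\<dots> = K / fact q / 2 ^ (2 * q - 1)"
  proof -
    have "(2::real) ^ q * 2 ^ (q - 1) = 2 ^ (2 * q - 1)" using q1 by (simp add: power_add[symmetric])
    then show ?thesis by (simp add: power_divide field_simps)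
  qed
  finally show ?thesis using eq eqL by simp
qed

lemma cheb_in:
  assumes a: "a < b"
  shows "j < q \<Longrightarrow> cheb_node q a b j \<in> {a..b}"
proof -
  have c1: "-1 \<le> cos (thn q j)" "cos (thn q j) \<le> 1" by auto
  have w: "(b - a) / 2 \<ge> 0" using a by simp
  have m1: "(b - a) / 2 * cos (thn q j) \<le> (b - a) / 2 * 1" using mult_left_mono[OF c1(2) w] .
  have m2: "(b - a) / 2 * (-1) \<le> (b - a) / 2 * cos (thn q j)" using mult_left_mono[OF c1(1) w] .
  have gen: "\<And>w. w \<le> (b - a) / 2 \<Longrightarrow> - ((b - a) / 2) \<le> w \<Longrightarrow> (a + b) / 2 + w \<in> {a..b}" by (auto simp: field_simps)
  show ?thesis unfolding cheb_node_thn by (rule gen) (use m1 m2 in simp_all)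
qed

theorem theorem3p1:
  fixes q :: nat and a b c d C \<mu> \<nu> s :: real and \<kappa> :: "real \<Rightarrow> real \<Rightarrow> real"
  assumes "q \<ge> 2"
    and "0 < a" and "a < b" and "0 < c" and "c < d"
    and "b - a \<le> a" and "d - c \<le> c"
    and "C \<ge> 0" and "\<mu> \<ge> 0" and "s \<ge> 0"
    and "asymptotically_smooth {a..b} {c..d} \<kappa> C \<mu> \<nu> s"
  shows "\<forall>y\<in>{a..b}. \<forall>\<xi>\<in>{c..d}.
           \<bar>\<kappa> y \<xi> - tensor_interp q a b c d \<kappa> y \<xi>\<bar>
             \<le> C * \<mu> ^ q * real q powr \<nu> / 2 ^ (2 * q - 1) * (2 + 2 / pi * ln (real q))
                * (a * c) powr (- s)"
proof -
  note q = assms(1)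
  obtain Dy Dx :: "nat \<Rightarrow> real \<Rightarrow> real \<Rightarrow> real" where
    D0: "\<forall>y\<in>{a..b}. \<forall>\<xi>\<in>{c..d}. Dy 0 y \<xi> = \<kappa> y \<xi> \<and> Dx 0 y \<xi> = \<kappa> y \<xi>" and
    Dd: "\<forall>n. \<forall>y\<in>{a..b}. \<forall>\<xi>\<in>{c..d}.
          ((\<lambda>t. Dy n t \<xi>) has_real_derivative Dy (Suc n) y \<xi>) (at y within {a..b}) \<and>
          ((\<lambda>t. Dx n y t) has_real_derivative Dx (Suc n) y \<xi>) (at \<xi> within {c..d})" and
    Db: "\<forall>n\<ge>1. \<forall>y\<in>{a..b}. \<forall>\<xi>\<in>{c..d}.
          \<bar>y ^ n * Dy n y \<xi>\<bar> \<le> C * fact n * \<mu> ^ n * real n powr \<nu> * (y * \<xi>) powr (- s) \<and>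
          \<bar>\<xi> ^ n * Dx n y \<xi>\<bar> \<le> C * fact n * \<mu> ^ n * real n powr \<nu> * (y * \<xi>) powr (- s)"
    using assms(11) unfolding asymptotically_smooth_def by blast
  define K where "K = C * fact q * \<mu> ^ q * real q powr \<nu> * (a * c) powr (- s)"
  define E where "E = K / fact q / 2 ^ (2 * q - 1)"
  define \<Lambda> where "\<Lambda> = 1 + 2 / pi * ln (real q)"
  have coef: "C * fact q * \<mu> ^ q * real q powr \<nu> \<ge> 0" using assms(8,9) by simp
  have pw: "(y * \<xi>) powr (- s) \<le> (a * c) powr (- s)" if "y \<in> {a..b}" "\<xi> \<in> {c..d}" for y \<xi>
  proof (rule powr_mono2')
    show "- s \<le> 0" using assms(10) by simp
    show "0 < a * c" using assms(2,4) by simp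
    show "a * c \<le> y * \<xi>" using that assms(2,4) by (intro mult_mono) auto
  qed
  have Kb: "\<bar>y ^ q * Dy q y \<xi>\<bar> \<le> K \<and> \<bar>\<xi> ^ q * Dx q y \<xi>\<bar> \<le> K" if "y \<in> {a..b}" "\<xi> \<in> {c..d}" for y \<xi>
  proof -
    have "C * fact q * \<mu> ^ q * real q powr \<nu> * (y * \<xi>) powr (- s) \<le> K"
      unfolding K_def using pw[OF that] coef by (intro mult_left_mono) auto
    moreover have "q \<ge> 1" using q by simp
    then have "\<bar>y ^ q * Dy q y \<xi>\<bar> \<le> C * fact q * \<mu> ^ q * real q powr \<nu> * (y * \<xi>) powr (- s) \<and>
          \<bar>\<xi> ^ q * Dx q y \<xi>\<bar> \<le> C * fact q * \<mu> ^ q * real q powr \<nu> * (y * \<xi>) powr (- s)"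
      using Db that by blast
    ultimately show ?thesis by linarith
  qed
  have errY: "\<bar>\<kappa> y \<xi> - (\<Sum>j<q. \<kappa> (cheb_node q a b j) \<xi> * lagrange_cheb q a b j y)\<bar> \<le> E"
    if y: "y \<in> {a..b}" and \<xi>: "\<xi> \<in> {c..d}" for y \<xi>
  proof -
    have "\<bar>Dy 0 y \<xi> - (\<Sum>j<q. Dy 0 (cheb_node q a b j) \<xi> * lagrange_cheb q a b j y)\<bar> \<le> E"
      unfolding E_def
    proof (rule err_1d[where D="\<lambda>n t. Dy n t \<xi>", OF q assms(2,3,6) _ _ y])
      show "\<And>n x. x \<in> {a..b} \<Longrightarrow> ((\<lambda>t. Dy n t \<xi>) has_real_derivative Dy (Suc n) x \<xi>) (at x within {a..b})"
        using Dd \<xi> by blast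
      show "\<And>\<eta>. \<eta> \<in> {a..b} \<Longrightarrow> \<bar>\<eta> ^ q * Dy q \<eta> \<xi>\<bar> \<le> K" using Kb \<xi> by blast
    qed
    moreover have "Dy 0 y \<xi> = \<kappa> y \<xi>" using D0 y \<xi> by blast
    moreover have "(\<Sum>j<q. Dy 0 (cheb_node q a b j) \<xi> * lagrange_cheb q a b j y)
        = (\<Sum>j<q. \<kappa> (cheb_node q a b j) \<xi> * lagrange_cheb q a b j y)"
    proof (intro sum.cong refl)
      fix j assume "j \<in> {..<q}"
      then have "cheb_node q a b j \<in> {a..b}" using cheb_in[OF assms(3)] by auto
      then show "Dy 0 (cheb_node q a b j) \<xi> * lagrange_cheb q a b j y = \<kappa> (cheb_node q a b j) \<xi> * lagrange_cheb q a b j y"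
        using D0 \<xi> by auto
    qed
    ultimately show ?thesis by simp
  qed
  have errX: "\<bar>\<kappa> y \<xi> - (\<Sum>r<q. \<kappa> y (cheb_node q c d r) * lagrange_cheb q c d r \<xi>)\<bar> \<le> E"
    if y: "y \<in> {a..b}" and \<xi>: "\<xi> \<in> {c..d}" for y \<xi>
  proof -
    have "\<bar>Dx 0 y \<xi> - (\<Sum>r<q. Dx 0 y (cheb_node q c d r) * lagrange_cheb q c d r \<xi>)\<bar> \<le> E"
      unfolding E_def
    proof (rule err_1d[where D="\<lambda>n t. Dx n y t", OF q assms(4,5,7) _ _ \<xi>])
      show "\<And>n x. x \<in> {c..d} \<Longrightarrow> ((\<lambda>t. Dx n y t) has_real_derivative Dx (Suc n) y x) (at x within {c..d})"
        using Dd y by blast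
      show "\<And>\<eta>. \<eta> \<in> {c..d} \<Longrightarrow> \<bar>\<eta> ^ q * Dx q y \<eta>\<bar> \<le> K" using Kb y by blast
    qed
    moreover have "Dx 0 y \<xi> = \<kappa> y \<xi>" using D0 y \<xi> by blast
    moreover have "(\<Sum>r<q. Dx 0 y (cheb_node q c d r) * lagrange_cheb q c d r \<xi>)
        = (\<Sum>r<q. \<kappa> y (cheb_node q c d r) * lagrange_cheb q c d r \<xi>)"
    proof (intro sum.cong refl)
      fix r assume "r \<in> {..<q}"
      then have "cheb_node q c d r \<in> {c..d}" using cheb_in[OF assms(5)] by auto
      then show "Dx 0 y (cheb_node q c d r) * lagrange_cheb q c d r \<xi> = \<kappa> y (cheb_node q c d r) * lagrange_cheb q c d r \<xi>"
        using D0 y by auto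
    qed
    ultimately show ?thesis by simp
  qed
  show ?thesis
  proof (intro ballI)
    fix y \<xi> assume y: "y \<in> {a..b}" and \<xi>: "\<xi> \<in> {c..d}"
    define L where "L j = lagrange_cheb q a b j y" for j
    define Ix where "Ix j = (\<Sum>r<q. \<kappa> (cheb_node q a b j) (cheb_node q c d r) * lagrange_cheb q c d r \<xi>)" for j
    have TI: "tensor_interp q a b c d \<kappa> y \<xi> = (\<Sum>j<q. L j * Ix j)"
      unfolding tensor_interp_def L_def Ix_def by (simp add: sum_distrib_left mult_ac)
    have split: "\<kappa> y \<xi> - tensor_interp q a b c d \<kappa> y \<xi>
       = (\<kappa> y \<xi> - (\<Sum>j<q. \<kappa> (cheb_node q a b j) \<xi> * L j)) + (\<Sum>j<q. L j * (\<kappa> (cheb_node q a b j) \<xi> - Ix j))"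
      unfolding TI by (simp add: sum_subtractf right_diff_distrib mult_ac)
    have E0: "E \<ge> 0" using errY[OF y \<xi>] by (rule order.trans[OF abs_ge_zero])
    have "\<bar>\<Sum>j<q. L j * (\<kappa> (cheb_node q a b j) \<xi> - Ix j)\<bar> \<le> (\<Sum>j<q. \<bar>L j\<bar> * E)"
    proof -
      have "\<bar>\<Sum>j<q. L j * (\<kappa> (cheb_node q a b j) \<xi> - Ix j)\<bar> \<le> (\<Sum>j<q. \<bar>L j * (\<kappa> (cheb_node q a b j) \<xi> - Ix j)\<bar>)"
        by (rule sum_abs)
      also have "\<dots> \<le> (\<Sum>j<q. \<bar>L j\<bar> * E)"
      proof (intro sum_mono)
        fix j assume "j \<in> {..<q}"
        then have "cheb_node q a b j \<in> {a..b}" using cheb_in[OF assms(3)] by auto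
        then have "\<bar>\<kappa> (cheb_node q a b j) \<xi> - Ix j\<bar> \<le> E" unfolding Ix_def using errX \<xi> by blast
        then show "\<bar>L j * (\<kappa> (cheb_node q a b j) \<xi> - Ix j)\<bar> \<le> \<bar>L j\<bar> * E"
          by (simp add: abs_mult mult_left_mono)
      qed
      finally show ?thesis .
    qed
    also have "\<dots> = (\<Sum>j<q. \<bar>L j\<bar>) * E" by (simp add: sum_distrib_right)
    also have "\<dots> \<le> \<Lambda> * E" unfolding L_def \<Lambda>_def using lebesgue_interval[OF q assms(3) y] E0
      by (intro mult_right_mono) auto
    finally have second: "\<bar>\<Sum>j<q. L j * (\<kappa> (cheb_node q a b j) \<xi> - Ix j)\<bar> \<le> \<Lambda> * E" .
    have first: "\<bar>\<kappa> y \<xi> - (\<Sum>j<q. \<kappa> (cheb_node q a b j) \<xi> * L j)\<bar> \<le> E"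
      using errY[OF y \<xi>] unfolding L_def .
    have "\<bar>\<kappa> y \<xi> - tensor_interp q a b c d \<kappa> y \<xi>\<bar> \<le> E + \<Lambda> * E"
      unfolding split using first second abs_triangle_ineq order.trans add_mono by fastforce
    also have "\<dots> = C * \<mu> ^ q * real q powr \<nu> / 2 ^ (2 * q - 1) * (2 + 2 / pi * ln (real q)) * (a * c) powr (- s)"
      unfolding E_def K_def \<Lambda>_def by (simp add: field_simps)
    finally show "\<bar>\<kappa> y \<xi> - tensor_interp q a b c d \<kappa> y \<xi>\<bar>
             \<le> C * \<mu> ^ q * real q powr \<nu> / 2 ^ (2 * q - 1) * (2 + 2 / pi * ln (real q)) * (a * c) powr (- s)" .
  qed
qed

end
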